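(* Let $S^0$ be an adequate semigroup with semilattice of idempotents $E^0$. Let $I=\bigcup_{x\in E^0}L_x$ be a left regular band and $\Lambda=\bigcup_{x\in E^0}R_x$ a right regular band having $E^0$ as a common semilattice transversal. Suppose that for each $x,y\in S^0$ there are mappings $\alpha_{x,y}:R_{x^\ast}\times L_{y^+}\to L_{(xy)^+}$ and $\beta_{x,y}:R_{x^\ast}\times L_{y^+}\to R_{(xy)^\ast}$ satisfying: 1. if $f\in R_{x^\ast}$, $g\in L_{y^+}$, $h\in R_{y^\ast}$, $k\in L_{z^+}$ ($x,y,z\in S^0$) then $(f,g)\alpha_{x,y}\,\big((f,g)\beta_{x,y}h,k\big)\alpha_{xy,z}=\big(f,g\,(h,k)\alpha_{y,z}\big)\alpha_{x,yz}$ and $\big(f,g\,(h,k)\alpha_{y,z}\big)\beta_{x,yz}\,(h,k)\beta_{y,z}=\big((f,g)\beta_{x,y}h,k\big)\beta_{xy,z}$; 2. $(x^\ast,y^+)\alpha_{x,y}=(xy)^+$ and $(x^\ast,y^+)\beta_{x,y}=(xy)^\ast$; 3. if $x,x_1,x_2\in S^0$, $e_1\in L_{x_1^+}$, $f_1\in R_{x_1^\ast}$, $e_2\in L_{x_2^+}$, $f_2\in R_{x_2^\ast}$, $e\in L_{x^+}$ and $e_1(f_1,e)\alpha_{x_1,x}=e_2(f_2,e)\alpha_{x_2,x}$, $x_1x=x_2x$ and $(f_1,e)\beta_{x_1,x}x^\ast=(f_2,e)\beta_{x_2,x}x^\ast$, then $e_1(f_1,e)\alpha_{x_1,x^+}=e_2(f_2,e)\alpha_{x_2,x^+}$,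 $x_1x^+=x_2x^+$ and $(f_1,e)\beta_{x_1,x^+}=(f_2,e)\beta_{x_2,x^+}$; 4. if $x,x_1,x_2\in S^0$, $e_1\in L_{x_1^+}$, $f_1\in R_{x_1^\ast}$, $e_2\in L_{x_2^+}$, $f_2\in R_{x_2^\ast}$, $f\in R_{x^\ast}$ and $x^+(f,e_1)\alpha_{x,x_1}=x^+(f,e_2)\alpha_{x,x_2}$, $xx_1=xx_2$ and $(f,e_1)\beta_{x,x_1}f_1=(f,e_2)\beta_{x,x_2}f_2$, then $(f,e_1)\alpha_{x^\ast,x_1}=(f,e_2)\alpha_{x^\ast,x_2}$, $x^\ast x_1=x^\ast x_2$ and $(f,e_1)\beta_{x^\ast,x_1}f_1=(f,e_2)\beta_{x^\ast,x_2}f_2$. Define on $W=\{(e,x,f)\in I\times S^0\times\Lambda: e\in L_{x^+},\ f\in R_{x^\ast}\}$ the multiplication $(e,x,f)(g,y,h)=\big(e(f,g)\alpha_{x,y},\,xy,\,(f,g)\beta_{x,y}h\big)$. Then $W$ is a quasi-adequate semigroup with an admissible adequate transversal isomorphic to $S^0$. If moreover 5. for all $f\in\Lambda$, $e\in I$: $(f^0,e)\alpha_{f^0,e^0}=f^0e$ and $(f,e^0)\beta_{f^0,e^0}=fe^0$, then $I(W)\cong I$ and $\Lambda(W)\cong\Lambda$. Moreover, every quasi-adequate semigroup with an admissible adequate transversal can be constructed (up to isomorphism) in this way.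
   Context: For a semigroup $S$, $S^1$ is $S$ with an identity adjoined, $E(S)$ its set of idempotents, $\mathcal{L},\mathcal{R}$ Green's relations. $\mathcal{R}^\ast=\{(a,b):\forall x,y\in S^1,\ xa=ya\iff xb=yb\}$ and $\mathcal{L}^\ast=\{(a,b):\forall x,y\in S^1,\ ax=ay\iff bx=by\}$. $S$ is abundant if every $\mathcal{R}^\ast$-class and every $\mathcal{L}^\ast$-class contains an idempotent; an abundant semigroup with commuting idempotents is adequate, and then $a^+$ (resp. $a^\ast$) denotes the unique idempotent $\mathcal{R}^\ast$-related (resp. $\mathcal{L}^\ast$-related) to $a$. An abundant subsemigroup $U$ of an abundant $S$ is a $\ast$-subsemigroup if $\mathcal{L}^\ast(U)=\mathcal{L}^\ast(S)\cap(U\times U)$ and $\mathcal{R}^\ast(U)=\mathcal{R}^\ast(S)\cap(U\times U)$. An adequate $\ast$-subsemigroup $S^0$ of an abundant semigroup $S$ is an adequate transversal if for each $x\in S$ there are a unique $\overline{x}\in S^0$ and idempotents $e,f$ of $S$ with $x=e\overline{x}f$, $e\,\mathcal{L}\,\overline{x}^+$, $f\,\mathcal{R}\,\overline{x}^\ast$; these $e,f$ are unique and written $e_x,f_x$; $I(S)=\{e_x:x\in S\}$, $\Lambda(S)=\{f_x:x\in S\}$ (so $I(W),\Lambda(W)$ refer to $W$ and its transversal). A semigroup is quasi-adequate if it is abundant and its idempotents form a subsemigroup; an adequate transversal of a quasi-adequate semigroup is admissible if $\overline{xy}=\overline{x}\,\overline{y}$ for all $x,y$. A left (right) regular band is a band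 with $xyx=xy$ ($xyx=yx$). $E^0$ is a semilattice transversal of a band $B$ if $E^0$ is a subsemilattice of $B$ and each $e\in B$ has exactly one inverse $e^0$ in $E^0$; "common" means $E^0\subseteq I\cap\Lambda$ with this property in both. For $x\in E^0$, $L_x$ is the $\mathcal{L}$-class of $x$ in $I$ and $R_x$ the $\mathcal{R}$-class of $x$ in $\Lambda$. Products such as $g\,(h,k)\alpha_{y,z}$, $e_1(f_1,e)\alpha$ are taken in $I$, and $(f,g)\beta_{x,y}h$, $(f_1,e)\beta x^\ast$ in $\Lambda$. *)

theory Defs
  imports Main
begin

definition sgrp :: "'a set \<Rightarrow> ('a \<Rightarrow> 'a \<Rightarrow> 'a) \<Rightarrow> bool" where
  "sgrp S m \<longleftrightarrow> (\<forall>x\<in>S. \<forall>y\<in>S. m x y \<in> S) \<and>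
     (\<forall>x\<in>S. \<forall>y\<in>S. \<forall>z\<in>S. m (m x y) z = m x (m y z))"

definition idems :: "'a set \<Rightarrow> ('a \<Rightarrow> 'a \<Rightarrow> 'a) \<Rightarrow> 'a set" where
  "idems S m = {e\<in>S. m e e = e}"

text \<open>Elements of S^1: None is the adjoined identity.\<close>
definition S1 :: "'a set \<Rightarrow> 'a option set" where
  "S1 S = insert None (Some ` S)"

definition lmul1 :: "('a \<Rightarrow> 'a \<Rightarrow> 'a) \<Rightarrow> 'a option \<Rightarrow> 'a \<Rightarrow> 'a" where
  "lmul1 m u a = (case u of None \<Rightarrow> a | Some x \<Rightarrow> m x a)"

definition rmul1 :: "('a \<Rightarrow> 'a \<Rightarrow> 'a) \<Rightarrow> 'a \<Rightarrow> 'a option \<Rightarrow> 'a" where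
  "rmul1 m a u = (case u of None \<Rightarrow> a | Some x \<Rightarrow> m a x)"

definition GL :: "'a set \<Rightarrow> ('a \<Rightarrow> 'a \<Rightarrow> 'a) \<Rightarrow> 'a \<Rightarrow> 'a \<Rightarrow> bool" where
  "GL S m a b \<longleftrightarrow> a \<in> S \<and> b \<in> S \<and>
     (\<exists>u\<in>S1 S. a = lmul1 m u b) \<and> (\<exists>u\<in>S1 S. b = lmul1 m u a)"

definition GR :: "'a set \<Rightarrow> ('a \<Rightarrow> 'a \<Rightarrow> 'a) \<Rightarrow> 'a \<Rightarrow> 'a \<Rightarrow> bool" where
  "GR S m a b \<longleftrightarrow> a \<in> S \<and> b \<in> S \<and>
     (\<exists>u\<in>S1 S. a = rmul1 m b u) \<and> (\<exists>u\<in>S1 S. b = rmul1 m a u)"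

definition Rstar :: "'a set \<Rightarrow> ('a \<Rightarrow> 'a \<Rightarrow> 'a) \<Rightarrow> 'a \<Rightarrow> 'a \<Rightarrow> bool" where
  "Rstar S m a b \<longleftrightarrow> a \<in> S \<and> b \<in> S \<and>
     (\<forall>u\<in>S1 S. \<forall>v\<in>S1 S. lmul1 m u a = lmul1 m v a \<longleftrightarrow> lmul1 m u b = lmul1 m v b)"

definition Lstar :: "'a set \<Rightarrow> ('a \<Rightarrow> 'a \<Rightarrow> 'a) \<Rightarrow> 'a \<Rightarrow> 'a \<Rightarrow> bool" where
  "Lstar S m a b \<longleftrightarrow> a \<in> S \<and> b \<in> S \<and>
     (\<forall>u\<in>S1 S. \<forall>v\<in>S1 S. rmul1 m a u = rmul1 m a v \<longleftrightarrow> rmul1 m b u = rmul1 m b v)"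

definition abundant :: "'a set \<Rightarrow> ('a \<Rightarrow> 'a \<Rightarrow> 'a) \<Rightarrow> bool" where
  "abundant S m \<longleftrightarrow> sgrp S m \<and>
     (\<forall>a\<in>S. (\<exists>e\<in>idems S m. Rstar S m a e) \<and> (\<exists>e\<in>idems S m. Lstar S m a e))"

definition adequate :: "'a set \<Rightarrow> ('a \<Rightarrow> 'a \<Rightarrow> 'a) \<Rightarrow> bool" where
  "adequate S m \<longleftrightarrow> abundant S m \<and> (\<forall>e\<in>idems S m. \<forall>f\<in>idems S m. m e f = m f e)"

text \<open>a^+ and a^* (meaningful in an adequate semigroup).\<close>
definition aplus :: "'a set \<Rightarrow> ('a \<Rightarrow> 'a \<Rightarrow> 'a) \<Rightarrow> 'a \<Rightarrow> 'a" where
  "aplus S m a = (THE e. e \<in> idems S m \<and> Rstar S m a e)"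

definition astar :: "'a set \<Rightarrow> ('a \<Rightarrow> 'a \<Rightarrow> 'a) \<Rightarrow> 'a \<Rightarrow> 'a" where
  "astar S m a = (THE e. e \<in> idems S m \<and> Lstar S m a e)"

definition star_subsgrp :: "'a set \<Rightarrow> 'a set \<Rightarrow> ('a \<Rightarrow> 'a \<Rightarrow> 'a) \<Rightarrow> bool" where
  "star_subsgrp U S m \<longleftrightarrow> U \<subseteq> S \<and> abundant U m \<and>
     (\<forall>a\<in>U. \<forall>b\<in>U. Lstar U m a b \<longleftrightarrow> Lstar S m a b) \<and>
     (\<forall>a\<in>U. \<forall>b\<in>U. Rstar U m a b \<longleftrightarrow> Rstar S m a b)"

definition decomp :: "'a set \<Rightarrow> ('a \<Rightarrow> 'a \<Rightarrow> 'a) \<Rightarrow> 'a set \<Rightarrow> 'a \<Rightarrow> 'a \<Rightarrow> 'a \<Rightarrow> 'a \<Rightarrow> bool" where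
  "decomp S m T x e xb f \<longleftrightarrow> xb \<in> T \<and> e \<in> idems S m \<and> f \<in> idems S m \<and>
     x = m (m e xb) f \<and> GL S m e (aplus T m xb) \<and> GR S m f (astar T m xb)"

definition adequate_transversal :: "'a set \<Rightarrow> ('a \<Rightarrow> 'a \<Rightarrow> 'a) \<Rightarrow> 'a set \<Rightarrow> bool" where
  "adequate_transversal S m T \<longleftrightarrow> abundant S m \<and> adequate T m \<and> star_subsgrp T S m \<and>
     (\<forall>x\<in>S. \<exists>!xb. \<exists>e f. decomp S m T x e xb f)"

definition tbar :: "'a set \<Rightarrow> ('a \<Rightarrow> 'a \<Rightarrow> 'a) \<Rightarrow> 'a set \<Rightarrow> 'a \<Rightarrow> 'a" where
  "tbar S m T x = (THE xb. \<exists>e f. decomp S m T x e xb f)"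

definition te :: "'a set \<Rightarrow> ('a \<Rightarrow> 'a \<Rightarrow> 'a) \<Rightarrow> 'a set \<Rightarrow> 'a \<Rightarrow> 'a" where
  "te S m T x = (THE e. \<exists>f. decomp S m T x e (tbar S m T x) f)"

definition tf :: "'a set \<Rightarrow> ('a \<Rightarrow> 'a \<Rightarrow> 'a) \<Rightarrow> 'a set \<Rightarrow> 'a \<Rightarrow> 'a" where
  "tf S m T x = (THE f. \<exists>e. decomp S m T x e (tbar S m T x) f)"

definition Iset :: "'a set \<Rightarrow> ('a \<Rightarrow> 'a \<Rightarrow> 'a) \<Rightarrow> 'a set \<Rightarrow> 'a set" where
  "Iset S m T = te S m T ` S"

definition Lamset :: "'a set \<Rightarrow> ('a \<Rightarrow> 'a \<Rightarrow> 'a) \<Rightarrow> 'a set \<Rightarrow> 'a set" where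
  "Lamset S m T = tf S m T ` S"

definition quasi_adequate :: "'a set \<Rightarrow> ('a \<Rightarrow> 'a \<Rightarrow> 'a) \<Rightarrow> bool" where
  "quasi_adequate S m \<longleftrightarrow> abundant S m \<and>
     (\<forall>e\<in>idems S m. \<forall>f\<in>idems S m. m e f \<in> idems S m)"

definition admissible_transversal :: "'a set \<Rightarrow> ('a \<Rightarrow> 'a \<Rightarrow> 'a) \<Rightarrow> 'a set \<Rightarrow> bool" where
  "admissible_transversal S m T \<longleftrightarrow> quasi_adequate S m \<and> adequate_transversal S m T \<and>
     (\<forall>x\<in>S. \<forall>y\<in>S. tbar S m T (m x y) = m (tbar S m T x) (tbar S m T y))"

definition sgrp_iso :: "'a set \<Rightarrow> ('a \<Rightarrow> 'a \<Rightarrow> 'a) \<Rightarrow> 'b set \<Rightarrow> ('b \<Rightarrow> 'b \<Rightarrow> 'b) \<Rightarrow> bool" where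
  "sgrp_iso A mA B mB \<longleftrightarrow> (\<exists>\<phi>. bij_betw \<phi> A B \<and>
     (\<forall>x\<in>A. \<forall>y\<in>A. \<phi> (mA x y) = mB (\<phi> x) (\<phi> y)))"

definition band :: "'a set \<Rightarrow> ('a \<Rightarrow> 'a \<Rightarrow> 'a) \<Rightarrow> bool" where
  "band B m \<longleftrightarrow> sgrp B m \<and> (\<forall>x\<in>B. m x x = x)"

definition left_regular_band :: "'a set \<Rightarrow> ('a \<Rightarrow> 'a \<Rightarrow> 'a) \<Rightarrow> bool" where
  "left_regular_band B m \<longleftrightarrow> band B m \<and> (\<forall>x\<in>B. \<forall>y\<in>B. m (m x y) x = m x y)"

definition right_regular_band :: "'a set \<Rightarrow> ('a \<Rightarrow> 'a \<Rightarrow> 'a) \<Rightarrow> bool" where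
  "right_regular_band B m \<longleftrightarrow> band B m \<and> (\<forall>x\<in>B. \<forall>y\<in>B. m (m x y) x = m y x)"

definition inverse_in :: "('a \<Rightarrow> 'a \<Rightarrow> 'a) \<Rightarrow> 'a \<Rightarrow> 'a \<Rightarrow> bool" where
  "inverse_in m a b \<longleftrightarrow> m (m a b) a = a \<and> m (m b a) b = b"

definition semilattice_transversal :: "'a set \<Rightarrow> ('a \<Rightarrow> 'a \<Rightarrow> 'a) \<Rightarrow> 'a set \<Rightarrow> bool" where
  "semilattice_transversal B m E0 \<longleftrightarrow> E0 \<subseteq> B \<and>
     (\<forall>x\<in>E0. \<forall>y\<in>E0. m x y \<in> E0 \<and> m x y = m y x) \<and>
     (\<forall>e\<in>B. \<exists>!e0. e0 \<in> E0 \<and> inverse_in m e e0)"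

definition inv0 :: "('a \<Rightarrow> 'a \<Rightarrow> 'a) \<Rightarrow> 'a set \<Rightarrow> 'a \<Rightarrow> 'a" where
  "inv0 m E0 e = (THE e0. e0 \<in> E0 \<and> inverse_in m e e0)"

definition Lcl :: "'a set \<Rightarrow> ('a \<Rightarrow> 'a \<Rightarrow> 'a) \<Rightarrow> 'a \<Rightarrow> 'a set" where
  "Lcl I mI x = {e. GL I mI e x}"

definition Rcl :: "'a set \<Rightarrow> ('a \<Rightarrow> 'a \<Rightarrow> 'a) \<Rightarrow> 'a \<Rightarrow> 'a set" where
  "Rcl L mL x = {f. GR L mL f x}"

text \<open>The data of the construction: S0 (op mS), I (op mI), Lambda (op mL), alpha, beta
  with alpha x y f g standing for (f,g) alpha_{x,y}, satisfying the standing hypotheses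
  and conditions 1--4.\<close>
definition construction_data ::
  "'a set \<Rightarrow> ('a \<Rightarrow> 'a \<Rightarrow> 'a) \<Rightarrow> 'a set \<Rightarrow> ('a \<Rightarrow> 'a \<Rightarrow> 'a) \<Rightarrow> 'a set \<Rightarrow> ('a \<Rightarrow> 'a \<Rightarrow> 'a)
   \<Rightarrow> ('a \<Rightarrow> 'a \<Rightarrow> 'a \<Rightarrow> 'a \<Rightarrow> 'a) \<Rightarrow> ('a \<Rightarrow> 'a \<Rightarrow> 'a \<Rightarrow> 'a \<Rightarrow> 'a) \<Rightarrow> bool" where
  "construction_data S0 mS I mI L mL \<alpha> \<beta> \<longleftrightarrow>
    (let E0 = idems S0 mS; pl = aplus S0 mS; st = astar S0 mS;
         LL = Lcl I mI; RR = Rcl L mL in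
     adequate S0 mS \<and>
     left_regular_band I mI \<and> right_regular_band L mL \<and>
     I = (\<Union>x\<in>E0. LL x) \<and> L = (\<Union>x\<in>E0. RR x) \<and>
     E0 \<subseteq> I \<inter> L \<and>
     semilattice_transversal I mI E0 \<and> semilattice_transversal L mL E0 \<and>
     (\<forall>x\<in>E0. \<forall>y\<in>E0. mI x y = mS x y \<and> mL x y = mS x y) \<and>
     \<comment> \<open>the mappings\<close>
     (\<forall>x\<in>S0. \<forall>y\<in>S0. \<forall>f\<in>RR (st x). \<forall>g\<in>LL (pl y).
        \<alpha> x y f g \<in> LL (pl (mS x y)) \<and> \<beta> x y f g \<in> RR (st (mS x y))) \<and>
     \<comment> \<open>condition 1\<close>
     (\<forall>x\<in>S0. \<forall>y\<in>S0. \<forall>z\<in>S0. \<forall>f\<in>RR (st x). \<forall>g\<in>LL (pl y). \<forall>h\<in>RR (st y). \<forall>k\<in>LL (pl z).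
        mI (\<alpha> x y f g) (\<alpha> (mS x y) z (mL (\<beta> x y f g) h) k)
          = \<alpha> x (mS y z) f (mI g (\<alpha> y z h k)) \<and>
        mL (\<beta> x (mS y z) f (mI g (\<alpha> y z h k))) (\<beta> y z h k)
          = \<beta> (mS x y) z (mL (\<beta> x y f g) h) k) \<and>
     \<comment> \<open>condition 2\<close>
     (\<forall>x\<in>S0. \<forall>y\<in>S0. \<alpha> x y (st x) (pl y) = pl (mS x y) \<and> \<beta> x y (st x) (pl y) = st (mS x y)) \<and>
     \<comment> \<open>condition 3\<close>
     (\<forall>x\<in>S0. \<forall>x1\<in>S0. \<forall>x2\<in>S0. \<forall>e1\<in>LL (pl x1). \<forall>f1\<in>RR (st x1).
        \<forall>e2\<in>LL (pl x2). \<forall>f2\<in>RR (st x2). \<forall>e\<in>LL (pl x).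
        mI e1 (\<alpha> x1 x f1 e) = mI e2 (\<alpha> x2 x f2 e) \<and> mS x1 x = mS x2 x \<and>
        mL (\<beta> x1 x f1 e) (st x) = mL (\<beta> x2 x f2 e) (st x) \<longrightarrow>
        mI e1 (\<alpha> x1 (pl x) f1 e) = mI e2 (\<alpha> x2 (pl x) f2 e) \<and> mS x1 (pl x) = mS x2 (pl x) \<and>
        \<beta> x1 (pl x) f1 e = \<beta> x2 (pl x) f2 e) \<and>
     \<comment> \<open>condition 4\<close>
     (\<forall>x\<in>S0. \<forall>x1\<in>S0. \<forall>x2\<in>S0. \<forall>e1\<in>LL (pl x1). \<forall>f1\<in>RR (st x1).
        \<forall>e2\<in>LL (pl x2). \<forall>f2\<in>RR (st x2). \<forall>f\<in>RR (st x).
        mI (pl x) (\<alpha> x x1 f e1) = mI (pl x) (\<alpha> x x2 f e2) \<and> mS x x1 = mS x x2 \<and>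
        mL (\<beta> x x1 f e1) f1 = mL (\<beta> x x2 f e2) f2 \<longrightarrow>
        \<alpha> (st x) x1 f e1 = \<alpha> (st x) x2 f e2 \<and> mS (st x) x1 = mS (st x) x2 \<and>
        mL (\<beta> (st x) x1 f e1) f1 = mL (\<beta> (st x) x2 f e2) f2))"

definition condition5 ::
  "'a set \<Rightarrow> ('a \<Rightarrow> 'a \<Rightarrow> 'a) \<Rightarrow> 'a set \<Rightarrow> ('a \<Rightarrow> 'a \<Rightarrow> 'a) \<Rightarrow> 'a set \<Rightarrow> ('a \<Rightarrow> 'a \<Rightarrow> 'a)
   \<Rightarrow> ('a \<Rightarrow> 'a \<Rightarrow> 'a \<Rightarrow> 'a \<Rightarrow> 'a) \<Rightarrow> ('a \<Rightarrow> 'a \<Rightarrow> 'a \<Rightarrow> 'a \<Rightarrow> 'a) \<Rightarrow> bool" where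
  "condition5 S0 mS I mI L mL \<alpha> \<beta> \<longleftrightarrow>
    (let E0 = idems S0 mS in
     \<forall>f\<in>L. \<forall>e\<in>I. \<alpha> (inv0 mL E0 f) (inv0 mI E0 e) (inv0 mL E0 f) e = mI (inv0 mL E0 f) e \<and>
                   \<beta> (inv0 mL E0 f) (inv0 mI E0 e) f (inv0 mI E0 e) = mL f (inv0 mI E0 e))"

definition Wset :: "'a set \<Rightarrow> ('a \<Rightarrow> 'a \<Rightarrow> 'a) \<Rightarrow> 'a set \<Rightarrow> ('a \<Rightarrow> 'a \<Rightarrow> 'a) \<Rightarrow> 'a set \<Rightarrow> ('a \<Rightarrow> 'a \<Rightarrow> 'a)
   \<Rightarrow> ('a \<times> 'a \<times> 'a) set" where
  "Wset S0 mS I mI L mL = {(e, x, f). e \<in> I \<and> x \<in> S0 \<and> f \<in> L \<and>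
      e \<in> Lcl I mI (aplus S0 mS x) \<and> f \<in> Rcl L mL (astar S0 mS x)}"

definition Wmult :: "('a \<Rightarrow> 'a \<Rightarrow> 'a) \<Rightarrow> ('a \<Rightarrow> 'a \<Rightarrow> 'a) \<Rightarrow> ('a \<Rightarrow> 'a \<Rightarrow> 'a)
   \<Rightarrow> ('a \<Rightarrow> 'a \<Rightarrow> 'a \<Rightarrow> 'a \<Rightarrow> 'a) \<Rightarrow> ('a \<Rightarrow> 'a \<Rightarrow> 'a \<Rightarrow> 'a \<Rightarrow> 'a)
   \<Rightarrow> 'a \<times> 'a \<times> 'a \<Rightarrow> 'a \<times> 'a \<times> 'a \<Rightarrow> 'a \<times> 'a \<times> 'a" where
  "Wmult mS mI mL \<alpha> \<beta> = (\<lambda>(e, x, f) (g, y, h).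
      (mI e (\<alpha> x y f g), mS x y, mL (\<beta> x y f g) h))"

end

theory Submission
  imports Defs
begin


lemma sgrp_closed: "sgrp S m \<Longrightarrow> x\<in>S \<Longrightarrow> y\<in>S \<Longrightarrow> m x y \<in> S"
  by (simp add: sgrp_def)
lemma sgrp_assoc: "sgrp S m \<Longrightarrow> x\<in>S \<Longrightarrow> y\<in>S \<Longrightarrow> z\<in>S \<Longrightarrow> m (m x y) z = m x (m y z)"
  by (simp add: sgrp_def)
lemma idems_iff: "e \<in> idems S m \<longleftrightarrow> e \<in> S \<and> m e e = e"
  by (simp add: idems_def)
lemma S1_iff: "u \<in> S1 S \<longleftrightarrow> u = None \<or> (\<exists>x\<in>S. u = Some x)"
  by (auto simp: S1_def)
lemma Some_S1: "x \<in> S \<Longrightarrow> Some x \<in> S1 S" and None_S1: "None \<in> S1 S"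
  by (auto simp: S1_def)
lemma lmul1_simps[simp]: "lmul1 m None a = a" "lmul1 m (Some x) a = m x a"
  by (simp_all add: lmul1_def)
lemma rmul1_simps[simp]: "rmul1 m a None = a" "rmul1 m a (Some x) = m a x"
  by (simp_all add: rmul1_def)

lemma Rstar_cancel: "Rstar S m a b \<Longrightarrow> u \<in> S \<Longrightarrow> v \<in> S \<Longrightarrow> m u a = m v a \<Longrightarrow> m u b = m v b"
  unfolding Rstar_def using Some_S1 by (metis lmul1_simps(2))
lemma Rstar_cancel1: "Rstar S m a b \<Longrightarrow> u \<in> S \<Longrightarrow> m u a = a \<Longrightarrow> m u b = b"
  unfolding Rstar_def using Some_S1 None_S1 by (metis lmul1_simps)
lemma Lstar_cancel: "Lstar S m a b \<Longrightarrow> u \<in> S \<Longrightarrow> v \<in> S \<Longrightarrow> m a u = m a v \<Longrightarrow> m b u = m b v"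
  unfolding Lstar_def using Some_S1 by (metis rmul1_simps(2))
lemma Lstar_cancel1: "Lstar S m a b \<Longrightarrow> u \<in> S \<Longrightarrow> m a u = a \<Longrightarrow> m b u = b"
  unfolding Lstar_def using Some_S1 None_S1 by (metis rmul1_simps)

lemma Rstar_sym: "Rstar S m a b \<Longrightarrow> Rstar S m b a"
  unfolding Rstar_def by blast
lemma Lstar_sym: "Lstar S m a b \<Longrightarrow> Lstar S m b a"
  unfolding Lstar_def by blast
lemma Rstar_trans: "Rstar S m a b \<Longrightarrow> Rstar S m b c \<Longrightarrow> Rstar S m a c"
  unfolding Rstar_def by blast
lemma Lstar_trans: "Lstar S m a b \<Longrightarrow> Lstar S m b c \<Longrightarrow> Lstar S m a c"
  unfolding Lstar_def by blast
lemma Rstar_refl: "a \<in> S \<Longrightarrow> Rstar S m a a"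
  unfolding Rstar_def by blast
lemma Lstar_refl: "a \<in> S \<Longrightarrow> Lstar S m a a"
  unfolding Lstar_def by blast
lemma Rstar_in: "Rstar S m a b \<Longrightarrow> a \<in> S \<and> b \<in> S" by (simp add: Rstar_def)
lemma Lstar_in: "Lstar S m a b \<Longrightarrow> a \<in> S \<and> b \<in> S" by (simp add: Lstar_def)

lemma Rstar_idem_left: "Rstar S m a e \<Longrightarrow> e \<in> idems S m \<Longrightarrow> m e a = a"
  using Rstar_cancel1[OF Rstar_sym] by (metis idems_iff)
lemma Lstar_idem_right: "Lstar S m a e \<Longrightarrow> e \<in> idems S m \<Longrightarrow> m a e = a"
  using Lstar_cancel1[OF Lstar_sym] by (metis idems_iff)

lemma Rstar_idems: "Rstar S m e f \<Longrightarrow> e \<in> idems S m \<Longrightarrow> f \<in> idems S m \<Longrightarrow> m f e = e \<and> m e f = f"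
  using Rstar_idem_left Rstar_sym by metis
lemma Lstar_idems: "Lstar S m e f \<Longrightarrow> e \<in> idems S m \<Longrightarrow> f \<in> idems S m \<Longrightarrow> m e f = e \<and> m f e = f"
  using Lstar_idem_right Lstar_sym by metis

lemma GL_idem: assumes "sgrp S m" "a \<in> idems S m" "b \<in> idems S m"
  shows "GL S m a b \<longleftrightarrow> m a b = a \<and> m b a = b"
proof
  assume g: "GL S m a b"
  then obtain u v where u: "u \<in> S1 S" "a = lmul1 m u b" and v: "v \<in> S1 S" "b = lmul1 m v a"
    by (auto simp: GL_def)
  have "m a b = a"
    using u assms by (cases u) (auto simp: S1_iff idems_iff sgrp_assoc)
  moreover have "m b a = b"
    using v assms by (cases v) (auto simp: S1_iff idems_iff sgrp_assoc)
  ultimately show "m a b = a \<and> m b a = b" by simp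
next
  assume "m a b = a \<and> m b a = b"
  then show "GL S m a b" using assms unfolding GL_def idems_iff
    by (metis Some_S1 lmul1_simps(2))
qed

lemma GR_idem: assumes "sgrp S m" "a \<in> idems S m" "b \<in> idems S m"
  shows "GR S m a b \<longleftrightarrow> m b a = a \<and> m a b = b"
proof
  assume g: "GR S m a b"
  then obtain u v where u: "u \<in> S1 S" "a = rmul1 m b u" and v: "v \<in> S1 S" "b = rmul1 m a v"
    by (auto simp: GR_def)
  have "m b a = a"
    using u assms by (cases u) (auto simp: S1_iff idems_iff, metis sgrp_assoc)
  moreover have "m a b = b"
    using v assms by (cases v) (auto simp: S1_iff idems_iff, metis sgrp_assoc)
  ultimately show "m b a = a \<and> m a b = b" by simp
next
  assume "m b a = a \<and> m a b = b"
  then show "GR S m a b" using assms unfolding GR_def idems_iff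
    by (metis Some_S1 rmul1_simps(2))
qed

lemma adequate_sgrp: "adequate S m \<Longrightarrow> sgrp S m"
  by (simp add: adequate_def abundant_def)

lemma aplus_unique: assumes "adequate S m" "e \<in> idems S m" "f \<in> idems S m"
  "Rstar S m a e" "Rstar S m a f" shows "e = f"
proof -
  have "Rstar S m e f" using assms Rstar_trans Rstar_sym by metis
  then have "m f e = e" "m e f = f" using Rstar_idems assms by metis+
  moreover have "m e f = m f e" using assms by (simp add: adequate_def)
  ultimately show ?thesis by simp
qed

lemma astar_unique: assumes "adequate S m" "e \<in> idems S m" "f \<in> idems S m"
  "Lstar S m a e" "Lstar S m a f" shows "e = f"
proof -
  have "Lstar S m e f" using assms Lstar_trans Lstar_sym by metis
  then have "m e f = e" "m f e = f" using Lstar_idems assms by metis+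
  moreover have "m e f = m f e" using assms by (simp add: adequate_def)
  ultimately show ?thesis by simp
qed

lemma aplus_eq: assumes "adequate S m" "e \<in> idems S m" "Rstar S m a e"
  shows "aplus S m a = e"
  unfolding aplus_def
proof (rule the_equality)
  fix x assume "x \<in> idems S m \<and> Rstar S m a x"
  then show "x = e" using aplus_unique[OF assms(1), of x e a] assms by simp
qed (use assms in simp)

lemma astar_eq: assumes "adequate S m" "e \<in> idems S m" "Lstar S m a e"
  shows "astar S m a = e"
  unfolding astar_def
proof (rule the_equality)
  fix x assume "x \<in> idems S m \<and> Lstar S m a x"
  then show "x = e" using astar_unique[OF assms(1), of x e a] assms by simp
qed (use assms in simp)

lemma aplus_props: assumes "adequate S m" "a \<in> S"
  shows "aplus S m a \<in> idems S m \<and> Rstar S m a (aplus S m a)"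
proof -
  have "\<exists>e\<in>idems S m. Rstar S m a e"
    using assms unfolding adequate_def abundant_def by blast
  then obtain e where e: "e \<in> idems S m" "Rstar S m a e" by blast
  have "aplus S m a = e" by (rule aplus_eq[OF assms(1) e])
  then show ?thesis using e by simp
qed

lemma astar_props: assumes "adequate S m" "a \<in> S"
  shows "astar S m a \<in> idems S m \<and> Lstar S m a (astar S m a)"
proof -
  have "\<exists>e\<in>idems S m. Lstar S m a e"
    using assms unfolding adequate_def abundant_def by blast
  then obtain e where e: "e \<in> idems S m" "Lstar S m a e" by blast
  have "astar S m a = e" by (rule astar_eq[OF assms(1) e])
  then show ?thesis using e by simp
qed

locale adeq =
  fixes S :: "'a set" and m :: "'a \<Rightarrow> 'a \<Rightarrow> 'a"
  assumes adeq: "adequate S m"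
begin

abbreviation "pl \<equiv> aplus S m"
abbreviation "st \<equiv> astar S m"
abbreviation "E \<equiv> idems S m"

lemma sg: "sgrp S m" using adeq adequate_sgrp by blast
lemma cl: "x \<in> S \<Longrightarrow> y \<in> S \<Longrightarrow> m x y \<in> S" by (rule sgrp_closed[OF sg])
lemma as: "x \<in> S \<Longrightarrow> y \<in> S \<Longrightarrow> z \<in> S \<Longrightarrow> m (m x y) z = m x (m y z)"
  by (rule sgrp_assoc[OF sg])
lemma Ecomm: "e \<in> E \<Longrightarrow> f \<in> E \<Longrightarrow> m e f = m f e"
  using adeq by (simp add: adequate_def)
lemma Ein: "e \<in> E \<Longrightarrow> e \<in> S" by (simp add: idems_iff)
lemma Eidem: "e \<in> E \<Longrightarrow> m e e = e" by (simp add: idems_iff)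
lemma Eclosed: assumes a: "e \<in> E" "f \<in> E" shows "m e f \<in> E"
proof -
  have S: "e \<in> S" "f \<in> S" using a Ein by auto
  have "m (m e f) (m e f) = m e (m f (m e f))" using S as cl by simp
  also have "m f (m e f) = m (m f e) f" using S as cl by simp
  also have "m f e = m e f" using a Ecomm by simp
  also have "m (m e f) f = m e f" using S as a Eidem by simp
  also have "m e (m e f) = m e f" using S as[of e e f] a Eidem by simp
  finally show ?thesis using cl[OF S] by (simp add: idems_iff)
qed

lemma pl_E: "a \<in> S \<Longrightarrow> pl a \<in> E" using aplus_props[OF adeq] by blast
lemma st_E: "a \<in> S \<Longrightarrow> st a \<in> E" using astar_props[OF adeq] by blast
lemma pl_S: "a \<in> S \<Longrightarrow> pl a \<in> S" using Ein[OF pl_E] .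
lemma st_S: "a \<in> S \<Longrightarrow> st a \<in> S" using Ein[OF st_E] .
lemma pl_R: "a \<in> S \<Longrightarrow> Rstar S m a (pl a)" using aplus_props[OF adeq] by blast
lemma st_L: "a \<in> S \<Longrightarrow> Lstar S m a (st a)" using astar_props[OF adeq] by blast
lemma pl_left: "a \<in> S \<Longrightarrow> m (pl a) a = a" using Rstar_idem_left[OF pl_R pl_E] .
lemma st_right: "a \<in> S \<Longrightarrow> m a (st a) = a" using Lstar_idem_right[OF st_L st_E] .
lemma pl_idem: "e \<in> E \<Longrightarrow> pl e = e" using aplus_eq[OF adeq _ Rstar_refl[OF Ein]] .
lemma st_idem: "e \<in> E \<Longrightarrow> st e = e" using astar_eq[OF adeq _ Lstar_refl[OF Ein]] .
lemma pl_prod: assumes "a \<in> S" "b \<in> S" shows "m (pl a) (pl (m a b)) = pl (m a b)"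
proof -
  have "m (pl a) (m a b) = m (m (pl a) a) b" using assms as pl_S by simp
  also have "\<dots> = m a b" using pl_left assms by simp
  finally show ?thesis using Rstar_cancel1[OF pl_R[OF cl[OF assms]] pl_S[OF assms(1)]] by simp
qed
lemma st_prod: assumes "a \<in> S" "b \<in> S" shows "m (st (m a b)) (st b) = st (m a b)"
proof -
  have "m (m a b) (st b) = m a (m b (st b))" using assms as st_S by simp
  also have "\<dots> = m a b" using st_right assms by simp
  finally show ?thesis using Lstar_cancel1[OF st_L[OF cl[OF assms]] st_S[OF assms(2)]] by simp
qed
lemma pl_prod': assumes "a \<in> S" "b \<in> S" shows "m (pl (m a b)) (pl a) = pl (m a b)"
  using pl_prod[OF assms] Ecomm[OF pl_E[OF cl[OF assms]] pl_E[OF assms(1)]] by simp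
lemma st_prod': assumes "a \<in> S" "b \<in> S" shows "m (st b) (st (m a b)) = st (m a b)"
  using st_prod[OF assms] Ecomm[OF st_E[OF cl[OF assms]] st_E[OF assms(2)]] by simp
lemma Rstar_iff: assumes "a \<in> S" "b \<in> S" shows "Rstar S m a b \<longleftrightarrow> pl a = pl b"
proof
  assume "Rstar S m a b"
  then have "Rstar S m b (pl a)" using Rstar_trans[OF Rstar_sym pl_R[OF assms(1)]] by blast
  then show "pl a = pl b" using aplus_eq[OF adeq pl_E[OF assms(1)]] by simp
next
  assume "pl a = pl b"
  then have "Rstar S m (pl a) b" using Rstar_sym[OF pl_R[OF assms(2)]] by simp
  then show "Rstar S m a b" using Rstar_trans[OF pl_R[OF assms(1)]] by blast
qed
lemma Lstar_iff: assumes "a \<in> S" "b \<in> S" shows "Lstar S m a b \<longleftrightarrow> st a = st b"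
proof
  assume "Lstar S m a b"
  then have "Lstar S m b (st a)" using Lstar_trans[OF Lstar_sym st_L[OF assms(1)]] by blast
  then show "st a = st b" using astar_eq[OF adeq st_E[OF assms(1)]] by simp
next
  assume "st a = st b"
  then have "Lstar S m (st a) b" using Lstar_sym[OF st_L[OF assms(2)]] by simp
  then show "Lstar S m a b" using Lstar_trans[OF st_L[OF assms(1)]] by blast
qed
end

lemma lmul1_in: "sgrp S m \<Longrightarrow> u \<in> S1 S \<Longrightarrow> a \<in> S \<Longrightarrow> lmul1 m u a \<in> S"
  by (auto simp: S1_iff sgrp_closed)
lemma rmul1_in: "sgrp S m \<Longrightarrow> u \<in> S1 S \<Longrightarrow> a \<in> S \<Longrightarrow> rmul1 m a u \<in> S"
  by (auto simp: S1_iff sgrp_closed)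
lemma lmul1_assoc: "sgrp S m \<Longrightarrow> u \<in> S1 S \<Longrightarrow> a \<in> S \<Longrightarrow> b \<in> S \<Longrightarrow>
  lmul1 m u (m a b) = m (lmul1 m u a) b"
  by (auto simp: S1_iff sgrp_assoc)
lemma rmul1_assoc: "sgrp S m \<Longrightarrow> u \<in> S1 S \<Longrightarrow> a \<in> S \<Longrightarrow> b \<in> S \<Longrightarrow>
  rmul1 m (m a b) u = m a (rmul1 m b u)"
  by (auto simp: S1_iff sgrp_assoc)


lemma Rstar_mk: assumes sg: "sgrp S m" and a: "a \<in> S" and e: "e \<in> idems S m" and ea: "m e a = a"
  and core: "\<And>u1 u2. u1 \<in> S \<Longrightarrow> u2 \<in> S \<Longrightarrow> m u1 a = m u2 a \<Longrightarrow> m u1 e = m u2 e"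
  shows "Rstar S m a e"
proof -
  have eS: "e \<in> S" and ee: "m e e = e" using e by (simp_all add: idems_iff)
  have bk: "lmul1 m u a = m (lmul1 m u e) a" if "u \<in> S1 S" for u
    using that ea sg a eS by (auto simp: S1_iff sgrp_assoc)
  have fw: "lmul1 m u e = lmul1 m v e" if u: "u \<in> S1 S" and v: "v \<in> S1 S"
    and h: "lmul1 m u a = lmul1 m v a" for u v
  proof -
    consider "u = None" "v = None" | u1 where "u = None" "v = Some u1" "u1 \<in> S"
      | u1 where "u = Some u1" "v = None" "u1 \<in> S" | u1 u2 where "u = Some u1" "v = Some u2" "u1 \<in> S" "u2 \<in> S"
      using u v by (auto simp: S1_iff)
    then show ?thesis
    proof cases
      case 1 then show ?thesis by simp
    next
      case (2 u1)
      then have "m e a = m u1 a" using h ea by simp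
      then have "m e e = m u1 e" using core[OF eS 2(3)] by simp
      then show ?thesis using 2 ee by simp
    next
      case (3 u1)
      then have "m u1 a = m e a" using h ea by simp
      then have "m u1 e = m e e" using core[OF 3(3) eS] by simp
      then show ?thesis using 3 ee by simp
    next
      case (4 u1 u2)
      then have "m u1 a = m u2 a" using h by simp
      then show ?thesis using core[OF 4(3,4)] 4 by simp
    qed
  qed
  show ?thesis unfolding Rstar_def
  proof (intro conjI ballI a eS iffI)
    fix u v assume "u \<in> S1 S" "v \<in> S1 S" "lmul1 m u a = lmul1 m v a"
    then show "lmul1 m u e = lmul1 m v e" by (rule fw)
  next
    fix u v assume "u \<in> S1 S" "v \<in> S1 S" "lmul1 m u e = lmul1 m v e"
    then show "lmul1 m u a = lmul1 m v a" using bk by metis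
  qed
qed

lemma Lstar_mk: assumes sg: "sgrp S m" and a: "a \<in> S" and e: "e \<in> idems S m" and ea: "m a e = a"
  and core: "\<And>u1 u2. u1 \<in> S \<Longrightarrow> u2 \<in> S \<Longrightarrow> m a u1 = m a u2 \<Longrightarrow> m e u1 = m e u2"
  shows "Lstar S m a e"
proof -
  have eS: "e \<in> S" and ee: "m e e = e" using e by (simp_all add: idems_iff)
  have bk: "rmul1 m a u = m a (rmul1 m e u)" if "u \<in> S1 S" for u
    using that ea sg a eS by (auto simp: S1_iff sgrp_assoc[symmetric])
  have fw: "rmul1 m e u = rmul1 m e v" if u: "u \<in> S1 S" and v: "v \<in> S1 S"
    and h: "rmul1 m a u = rmul1 m a v" for u v
  proof -
    consider "u = None" "v = None" | u1 where "u = None" "v = Some u1" "u1 \<in> S"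
      | u1 where "u = Some u1" "v = None" "u1 \<in> S" | u1 u2 where "u = Some u1" "v = Some u2" "u1 \<in> S" "u2 \<in> S"
      using u v by (auto simp: S1_iff)
    then show ?thesis
    proof cases
      case 1 then show ?thesis by simp
    next
      case (2 u1)
      then have "m a e = m a u1" using h ea by simp
      then have "m e e = m e u1" using core[OF eS 2(3)] by simp
      then show ?thesis using 2 ee by simp
    next
      case (3 u1)
      then have "m a u1 = m a e" using h ea by simp
      then have "m e u1 = m e e" using core[OF 3(3) eS] by simp
      then show ?thesis using 3 ee by simp
    next
      case (4 u1 u2)
      then have "m a u1 = m a u2" using h by simp
      then show ?thesis using core[OF 4(3,4)] 4 by simp
    qed
  qed
  show ?thesis unfolding Lstar_def
  proof (intro conjI ballI a eS iffI)
    fix u v assume "u \<in> S1 S" "v \<in> S1 S" "rmul1 m a u = rmul1 m a v"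
    then show "rmul1 m e u = rmul1 m e v" by (rule fw)
  next
    fix u v assume "u \<in> S1 S" "v \<in> S1 S" "rmul1 m e u = rmul1 m e v"
    then show "rmul1 m a u = rmul1 m a v" using bk by metis
  qed
qed

locale siso =
  fixes A :: "'a set" and ma :: "'a \<Rightarrow> 'a \<Rightarrow> 'a" and B :: "'b set" and mb :: "'b \<Rightarrow> 'b \<Rightarrow> 'b"
    and h :: "'a \<Rightarrow> 'b"
  assumes bij: "bij_betw h A B" and hom: "\<And>x y. x \<in> A \<Longrightarrow> y \<in> A \<Longrightarrow> h (ma x y) = mb (h x) (h y)"
    and sgA: "sgrp A ma"
begin
lemma inj: "x \<in> A \<Longrightarrow> y \<in> A \<Longrightarrow> h x = h y \<longleftrightarrow> x = y"
  using bij by (auto simp: bij_betw_def inj_on_def)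
lemma img: "B = h ` A" using bij by (simp add: bij_betw_def)
lemma hin: "x \<in> A \<Longrightarrow> h x \<in> B" using img by blast
lemma clA: "x \<in> A \<Longrightarrow> y \<in> A \<Longrightarrow> ma x y \<in> A" using sgA by (simp add: sgrp_def)
lemma sgB: "sgrp B mb"
  unfolding sgrp_def img
  by (auto simp: hom[symmetric] clA sgrp_assoc[OF sgA])
lemma S1B: "(\<forall>u\<in>S1 B. P u) \<longleftrightarrow> (\<forall>u\<in>S1 A. P (map_option h u))"
  by (auto simp: S1_def img)
lemma lm: "u \<in> S1 A \<Longrightarrow> a \<in> A \<Longrightarrow> lmul1 mb (map_option h u) (h a) = h (lmul1 ma u a)"
  by (auto simp: S1_iff hom)
lemma rm: "u \<in> S1 A \<Longrightarrow> a \<in> A \<Longrightarrow> rmul1 mb (h a) (map_option h u) = h (rmul1 ma a u)"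
  by (auto simp: S1_iff hom)
lemma lmA: "u \<in> S1 A \<Longrightarrow> a \<in> A \<Longrightarrow> lmul1 ma u a \<in> A" using lmul1_in[OF sgA] .
lemma rmA: "u \<in> S1 A \<Longrightarrow> a \<in> A \<Longrightarrow> rmul1 ma a u \<in> A" using rmul1_in[OF sgA] .
lemma Rstar_tr: assumes "a \<in> A" "b \<in> A" shows "Rstar B mb (h a) (h b) \<longleftrightarrow> Rstar A ma a b"
proof -
  have "Rstar B mb (h a) (h b) \<longleftrightarrow> (\<forall>u\<in>S1 B. \<forall>v\<in>S1 B.
     (lmul1 mb u (h a) = lmul1 mb v (h a)) = (lmul1 mb u (h b) = lmul1 mb v (h b)))"
    using assms hin by (simp add: Rstar_def)
  also have "\<dots> \<longleftrightarrow> (\<forall>u\<in>S1 A. \<forall>v\<in>S1 A.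
     (lmul1 ma u a = lmul1 ma v a) = (lmul1 ma u b = lmul1 ma v b))"
    using assms by (simp add: S1B lm inj lmA)
  also have "\<dots> \<longleftrightarrow> Rstar A ma a b" using assms by (simp add: Rstar_def)
  finally show ?thesis .
qed
lemma Lstar_tr: assumes "a \<in> A" "b \<in> A" shows "Lstar B mb (h a) (h b) \<longleftrightarrow> Lstar A ma a b"
proof -
  have "Lstar B mb (h a) (h b) \<longleftrightarrow> (\<forall>u\<in>S1 B. \<forall>v\<in>S1 B.
     (rmul1 mb (h a) u = rmul1 mb (h a) v) = (rmul1 mb (h b) u = rmul1 mb (h b) v))"
    using assms hin by (simp add: Lstar_def)
  also have "\<dots> \<longleftrightarrow> (\<forall>u\<in>S1 A. \<forall>v\<in>S1 A.
     (rmul1 ma a u = rmul1 ma a v) = (rmul1 ma b u = rmul1 ma b v))"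
    using assms by (simp add: S1B rm inj rmA)
  also have "\<dots> \<longleftrightarrow> Lstar A ma a b" using assms by (simp add: Lstar_def)
  finally show ?thesis .
qed
lemma idems_tr: assumes "a \<in> A" shows "h a \<in> idems B mb \<longleftrightarrow> a \<in> idems A ma"
  using assms by (simp add: idems_iff hin hom[symmetric] inj clA)
lemma idemsB: "e \<in> idems B mb \<Longrightarrow> \<exists>a\<in>idems A ma. e = h a"
  using idems_tr img by (auto simp: idems_iff)
lemma adequate_tr: assumes "adequate A ma" shows "adequate B mb"
  unfolding adequate_def abundant_def
proof (intro conjI ballI sgB)
  fix b assume "b \<in> B"
  then obtain a where a: "a \<in> A" "b = h a" using img by blast
  obtain e where e: "e \<in> idems A ma" "Rstar A ma a e" using aplus_props[OF assms a(1)] by blast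
  obtain f where f: "f \<in> idems A ma" "Lstar A ma a f" using astar_props[OF assms a(1)] by blast
  have eA: "e \<in> A" "f \<in> A" using e f by (simp_all add: idems_iff)
  show "\<exists>e\<in>idems B mb. Rstar B mb b e" using e a eA idems_tr Rstar_tr by blast
  show "\<exists>e\<in>idems B mb. Lstar B mb b e" using f a eA idems_tr Lstar_tr by blast
next
  fix e f assume "e \<in> idems B mb" "f \<in> idems B mb"
  then obtain a c where ac: "a \<in> idems A ma" "c \<in> idems A ma" "e = h a" "f = h c" using idemsB by metis
  have "ma a c = ma c a" using assms ac by (simp add: adequate_def)
  moreover have "a \<in> A" "c \<in> A" using ac by (simp_all add: idems_iff)
  ultimately show "mb e f = mb f e" using ac hom by metis
qed
end




locale p2 =
  fixes S :: "'a set" and m :: "'a \<Rightarrow> 'a \<Rightarrow> 'a" and T :: "'a set"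
  assumes adm: "admissible_transversal S m T"
begin

lemma at: "adequate_transversal S m T" using adm by (simp add: admissible_transversal_def)
lemma qa: "quasi_adequate S m" using adm by (simp add: admissible_transversal_def)
lemma abS: "abundant S m" using at by (simp add: adequate_transversal_def)
lemma sg: "sgrp S m" using abS by (simp add: abundant_def)
lemma adT: "adequate T m" using at by (simp add: adequate_transversal_def)
lemma ss: "star_subsgrp T S m" using at by (simp add: adequate_transversal_def)
lemma TS: "T \<subseteq> S" using ss by (simp add: star_subsgrp_def)
lemma ex1: "x \<in> S \<Longrightarrow> \<exists>!xb. \<exists>e f. decomp S m T x e xb f"
  using at by (simp add: adequate_transversal_def)
lemma tmult: "x \<in> S \<Longrightarrow> y \<in> S \<Longrightarrow> tbar S m T (m x y) = m (tbar S m T x) (tbar S m T y)"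
  using adm by (simp add: admissible_transversal_def)

sublocale T: adeq T m by (rule adeq.intro[OF adT])

abbreviation "ES \<equiv> idems S m"
abbreviation "E0 \<equiv> idems T m"

lemma clS[simp]: "x \<in> S \<Longrightarrow> y \<in> S \<Longrightarrow> m x y \<in> S" by (rule sgrp_closed[OF sg])
lemma asS: "x \<in> S \<Longrightarrow> y \<in> S \<Longrightarrow> z \<in> S \<Longrightarrow> m (m x y) z = m x (m y z)"
  by (rule sgrp_assoc[OF sg])
lemma TinS[simp]: "x \<in> T \<Longrightarrow> x \<in> S" using TS by auto
lemma ESin[simp]: "e \<in> ES \<Longrightarrow> e \<in> S" by (simp add: idems_iff)
lemma E0in[simp]: "e \<in> E0 \<Longrightarrow> e \<in> T" by (simp add: idems_iff)
lemma E0ES[simp]: "e \<in> E0 \<Longrightarrow> e \<in> ES" by (simp add: idems_iff)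
lemma ESidem: "e \<in> ES \<Longrightarrow> m e e = e" by (simp add: idems_iff)
lemma ESband[simp]: "e \<in> ES \<Longrightarrow> f \<in> ES \<Longrightarrow> m e f \<in> ES"
  using qa by (simp add: quasi_adequate_def)
lemma E0cl[simp]: "e \<in> E0 \<Longrightarrow> f \<in> E0 \<Longrightarrow> m e f \<in> E0" by (rule T.Eclosed)
lemma E0comm: "e \<in> E0 \<Longrightarrow> f \<in> E0 \<Longrightarrow> m e f = m f e" by (rule T.Ecomm)
lemma E0idem: "e \<in> E0 \<Longrightarrow> m e e = e" by (simp add: idems_iff)
lemma plE0[simp]: "x \<in> T \<Longrightarrow> T.pl x \<in> E0" by (rule T.pl_E)
lemma stE0[simp]: "x \<in> T \<Longrightarrow> T.st x \<in> E0" by (rule T.st_E)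
lemma plS[simp]: "x \<in> T \<Longrightarrow> T.pl x \<in> S" by simp
lemma stS[simp]: "x \<in> T \<Longrightarrow> T.st x \<in> S" by simp
lemma plES[simp]: "x \<in> T \<Longrightarrow> T.pl x \<in> ES" by simp
lemma stES[simp]: "x \<in> T \<Longrightarrow> T.st x \<in> ES" by simp
lemma clT[simp]: "x \<in> T \<Longrightarrow> y \<in> T \<Longrightarrow> m x y \<in> T" by (rule T.cl)

lemma RstarTS: "a \<in> T \<Longrightarrow> b \<in> T \<Longrightarrow> Rstar S m a b \<longleftrightarrow> Rstar T m a b"
  using ss by (simp add: star_subsgrp_def)
lemma LstarTS: "a \<in> T \<Longrightarrow> b \<in> T \<Longrightarrow> Lstar S m a b \<longleftrightarrow> Lstar T m a b"
  using ss by (simp add: star_subsgrp_def)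

lemma decomp_iff: "decomp S m T x e xb f \<longleftrightarrow> xb \<in> T \<and> e \<in> ES \<and> f \<in> ES \<and> x = m (m e xb) f \<and>
   m e (T.pl xb) = e \<and> m (T.pl xb) e = T.pl xb \<and> m (T.st xb) f = f \<and> m f (T.st xb) = T.st xb"
  unfolding decomp_def
  using GL_idem[OF sg, of e "T.pl xb"] GR_idem[OF sg, of f "T.st xb"] by auto

lemma D1: assumes d: "decomp S m T x e xb f" shows "Rstar S m x e"
proof -
  let ?p = "T.pl xb" and ?s = "T.st xb"
  have xb: "xb \<in> T" and e: "e \<in> ES" and f: "f \<in> ES" and x: "x = m (m e xb) f"
    and ep: "m e ?p = e" and fs: "m f ?s = ?s" using d by (simp_all add: decomp_iff)
  have xS: "x \<in> S" using x xb e f by simp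
  have key: "lmul1 m u x = m (m (lmul1 m u e) xb) f" if "u \<in> S1 S" for u
    using that x xb e f by (simp add: lmul1_assoc[OF sg])
  have xs: "m (m w xb) ?s = m w xb" if "w \<in> S" for w
    using that xb T.st_right by (simp add: asS)
  have pR: "Rstar S m xb ?p" using T.pl_R[OF xb] RstarTS xb by simp
  have wp: "m (lmul1 m u e) ?p = lmul1 m u e" if "u \<in> S1 S" for u
    using that e ep xb by (auto simp: S1_iff asS)
  show ?thesis unfolding Rstar_def
  proof (intro conjI ballI xS)
    show "e \<in> S" using e by simp
    fix u v assume u: "u \<in> S1 S" and v: "v \<in> S1 S"
    have uS: "lmul1 m u e \<in> S" and vS: "lmul1 m v e \<in> S" using lmul1_in[OF sg] u v e by auto
    show "(lmul1 m u x = lmul1 m v x) = (lmul1 m u e = lmul1 m v e)"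
    proof
      assume h: "lmul1 m u x = lmul1 m v x"
      have "m (m (m (lmul1 m u e) xb) f) ?s = m (m (m (lmul1 m v e) xb) f) ?s"
        using h key u v by simp
      then have "m (lmul1 m u e) xb = m (lmul1 m v e) xb"
        using uS vS xb f fs xs by (simp add: asS)
      then have "m (lmul1 m u e) ?p = m (lmul1 m v e) ?p"
        using Rstar_cancel[OF pR uS vS] by simp
      then show "lmul1 m u e = lmul1 m v e" using wp u v by simp
    next
      assume "lmul1 m u e = lmul1 m v e" then show "lmul1 m u x = lmul1 m v x"
        using key u v by simp
    qed
  qed
qed

lemma D1': assumes d: "decomp S m T x e xb f" shows "Lstar S m x f"
proof -
  let ?p = "T.pl xb" and ?s = "T.st xb"
  have xb: "xb \<in> T" and e: "e \<in> ES" and f: "f \<in> ES" and x: "x = m (m e xb) f"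
    and ep: "m ?p e = ?p" and fs: "m ?s f = f" using d by (simp_all add: decomp_iff)
  have xS: "x \<in> S" using x xb e f by simp
  have key: "rmul1 m x u = m e (m xb (rmul1 m f u))" if "u \<in> S1 S" for u
    using that x xb e f by (auto simp: S1_iff asS)
  have xs: "m ?p (m xb w) = m xb w" if "w \<in> S" for w
    using that xb T.pl_left by (simp flip: asS)
  have pL: "Lstar S m xb ?s" using T.st_L[OF xb] LstarTS xb by simp
  have wp: "m ?s (rmul1 m f u) = rmul1 m f u" if "u \<in> S1 S" for u
    using that f fs xb by (auto simp: S1_iff simp flip: asS)
  show ?thesis unfolding Lstar_def
  proof (intro conjI ballI xS)
    show "f \<in> S" using f by simp
    fix u v assume u: "u \<in> S1 S" and v: "v \<in> S1 S"
    have uS: "rmul1 m f u \<in> S" and vS: "rmul1 m f v \<in> S" using rmul1_in[OF sg] u v f by auto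
    show "(rmul1 m x u = rmul1 m x v) = (rmul1 m f u = rmul1 m f v)"
    proof
      assume h: "rmul1 m x u = rmul1 m x v"
      have "m ?p (m e (m xb (rmul1 m f u))) = m ?p (m e (m xb (rmul1 m f v)))"
        using h key u v by simp
      then have "m xb (rmul1 m f u) = m xb (rmul1 m f v)"
        using uS vS xb e ep xs by (simp flip: asS)
      then have "m ?s (rmul1 m f u) = m ?s (rmul1 m f v)"
        using Lstar_cancel[OF pL uS vS] by simp
      then show "rmul1 m f u = rmul1 m f v" using wp u v by simp
    next
      assume "rmul1 m f u = rmul1 m f v" then show "rmul1 m x u = rmul1 m x v"
        using key u v by simp
    qed
  qed
qed

lemma D2: assumes d: "decomp S m T x e xb f" and d': "decomp S m T x e' xb f'"
  shows "e = e' \<and> f = f'"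
proof
  let ?p = "T.pl xb"
  have R: "Rstar S m e e'" using Rstar_trans[OF Rstar_sym[OF D1[OF d]] D1[OF d']] .
  have e: "e \<in> ES" "e' \<in> ES" "xb \<in> T" using d d' by (simp_all add: decomp_iff)
  have h: "m e ?p = e" "m ?p e = ?p" "m e' ?p = e'" using d d' by (simp_all add: decomp_iff)
  have "m e' e = e" using Rstar_idems[OF R e(1,2)] by simp
  then have "e = m (m e' ?p) e" using h by simp
  also have "\<dots> = m e' (m ?p e)" using e by (simp add: asS)
  also have "\<dots> = e'" using h by simp
  finally show "e = e'" .
next
  let ?s = "T.st xb"
  have R: "Lstar S m f f'" using Lstar_trans[OF Lstar_sym[OF D1'[OF d]] D1'[OF d']] .
  have f: "f \<in> ES" "f' \<in> ES" "xb \<in> T" using d d' by (simp_all add: decomp_iff)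
  have h: "m ?s f = f" "m f ?s = ?s" "m ?s f' = f'" using d d' by (simp_all add: decomp_iff)
  have "m f f' = f" using Lstar_idems[OF R f(1,2)] by simp
  then have "f = m f (m ?s f')" using h by simp
  also have "\<dots> = m (m f ?s) f'" using f by (simp add: asS)
  also have "\<dots> = f'" using h by simp
  finally show "f = f'" .
qed

lemma decomp_S: "decomp S m T x e xb f \<Longrightarrow> x \<in> S"
  by (simp add: decomp_iff)

lemma D3: assumes d: "decomp S m T x e xb f"
  shows "tbar S m T x = xb \<and> te S m T x = e \<and> tf S m T x = f"
proof -
  have xS: "x \<in> S" using decomp_S[OF d] .
  have tb: "tbar S m T x = xb" unfolding tbar_def
  proof (rule the_equality)
    show "\<exists>e f. decomp S m T x e xb f" using d by blast
    fix xb' assume "\<exists>e f. decomp S m T x e xb' f"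
    then show "xb' = xb" using ex1[OF xS] d by blast
  qed
  have "te S m T x = e" unfolding te_def tb
  proof (rule the_equality)
    show "\<exists>f. decomp S m T x e xb f" using d by blast
    fix e' assume "\<exists>f. decomp S m T x e' xb f"
    then show "e' = e" using D2 d by blast
  qed
  moreover have "tf S m T x = f" unfolding tf_def tb
  proof (rule the_equality)
    show "\<exists>e. decomp S m T x e xb f" using d by blast
    fix f' assume "\<exists>e. decomp S m T x e xb f'"
    then show "f' = f" using D2 d by blast
  qed
  ultimately show ?thesis using tb by simp
qed

lemma D4: assumes "x \<in> S" shows "decomp S m T x (te S m T x) (tbar S m T x) (tf S m T x)"
proof -
  obtain xb e f where "decomp S m T x e xb f" using ex1[OF assms] by blast
  then show ?thesis using D3 by simp
qed

lemma Dmk: assumes "xb \<in> T" "e \<in> ES" "f \<in> ES" "m e (T.pl xb) = e" "m (T.pl xb) e = T.pl xb"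
  "m (T.st xb) f = f" "m f (T.st xb) = T.st xb"
  shows "tbar S m T (m (m e xb) f) = xb \<and> te S m T (m (m e xb) f) = e \<and> tf S m T (m (m e xb) f) = f"
  using D3 assms by (simp add: decomp_iff)

abbreviation "tb \<equiv> tbar S m T"
abbreviation "tE \<equiv> te S m T"
abbreviation "tF \<equiv> tf S m T"

lemma tb_T: "x \<in> T \<Longrightarrow> tb x = x \<and> tE x = T.pl x \<and> tF x = T.st x"
  using Dmk[of x "T.pl x" "T.st x"] T.pl_left T.st_right T.pl_idem T.st_idem E0idem
  by (simp add: asS)

lemma tb_in: "x \<in> S \<Longrightarrow> tb x \<in> T" using D4 by (simp add: decomp_iff)
lemma tE_in: "x \<in> S \<Longrightarrow> tE x \<in> ES" using D4 by (simp add: decomp_iff)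
lemma tF_in: "x \<in> S \<Longrightarrow> tF x \<in> ES" using D4 by (simp add: decomp_iff)
lemma t_eq: "x \<in> S \<Longrightarrow> x = m (m (tE x) (tb x)) (tF x)" using D4 by (simp add: decomp_iff)
lemma tE_L: "x \<in> S \<Longrightarrow> m (tE x) (T.pl (tb x)) = tE x \<and> m (T.pl (tb x)) (tE x) = T.pl (tb x)"
  using D4 by (simp add: decomp_iff)
lemma tF_R: "x \<in> S \<Longrightarrow> m (T.st (tb x)) (tF x) = tF x \<and> m (tF x) (T.st (tb x)) = T.st (tb x)"
  using D4 by (simp add: decomp_iff)

definition "I0 = Iset S m T"
definition "L0 = Lamset S m T"

lemma tI: assumes "e \<in> ES" "z \<in> E0" "m e z = e" "m z e = z"
  shows "tb e = z \<and> tE e = e \<and> tF e = z"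
  using Dmk[of z e z] assms T.pl_idem T.st_idem E0idem by simp

lemma tL: assumes "f \<in> ES" "z \<in> E0" "m z f = f" "m f z = z"
  shows "tb f = z \<and> tE f = z \<and> tF f = f"
  using Dmk[of z z f] assms T.pl_idem T.st_idem E0idem by (simp add: asS)

lemma I0_iff: "e \<in> I0 \<longleftrightarrow> e \<in> ES \<and> (\<exists>z\<in>E0. m e z = e \<and> m z e = z)"
proof
  assume "e \<in> I0"
  then obtain x where x: "x \<in> S" "e = tE x" by (auto simp: I0_def Iset_def)
  then show "e \<in> ES \<and> (\<exists>z\<in>E0. m e z = e \<and> m z e = z)"
    using tE_in[OF x(1)] tE_L[OF x(1)] plE0[OF tb_in[OF x(1)]] x(2) by blast
next
  assume "e \<in> ES \<and> (\<exists>z\<in>E0. m e z = e \<and> m z e = z)"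
  then obtain z where "e \<in> ES" "z \<in> E0" "m e z = e" "m z e = z" by blast
  then have "tE e = e" using tI by blast
  then show "e \<in> I0" using \<open>e \<in> ES\<close> unfolding I0_def Iset_def by (metis ESin imageI)
qed

lemma L0_iff: "f \<in> L0 \<longleftrightarrow> f \<in> ES \<and> (\<exists>z\<in>E0. m z f = f \<and> m f z = z)"
proof
  assume "f \<in> L0"
  then obtain x where x: "x \<in> S" "f = tF x" by (auto simp: L0_def Lamset_def)
  then show "f \<in> ES \<and> (\<exists>z\<in>E0. m z f = f \<and> m f z = z)"
    using tF_in[OF x(1)] tF_R[OF x(1)] stE0[OF tb_in[OF x(1)]] x(2) by blast
next
  assume "f \<in> ES \<and> (\<exists>z\<in>E0. m z f = f \<and> m f z = z)"
  then obtain z where "f \<in> ES" "z \<in> E0" "m z f = f" "m f z = z" by blast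
  then have "tF f = f" using tL by blast
  then show "f \<in> L0" using \<open>f \<in> ES\<close> unfolding L0_def Lamset_def by (metis ESin imageI)
qed

lemma K1: assumes mem: "e \<in> ES" "g \<in> ES" "p \<in> E0" "q \<in> E0"
  and eq: "m e p = e" "m p e = p" "m g q = g" "m q g = q" "m q p = q"
  shows "m (m e g) q = m e g \<and> m q (m e g) = q"
proof
  have "m (m e g) q = m e (m g q)" using mem by (simp add: asS)
  then show "m (m e g) q = m e g" using eq by simp
  have "m q (m e g) = m (m q p) (m e g)" using eq by simp
  also have "\<dots> = m q (m (m p e) g)" using mem by (simp add: asS)
  also have "\<dots> = m q (m p g)" using eq by simp
  also have "\<dots> = m (m q p) g" using mem by (simp add: asS)
  also have "\<dots> = q" using eq by simp
  finally show "m q (m e g) = q" .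
qed

lemma K1': assumes mem: "f \<in> ES" "h \<in> ES" "s \<in> E0" "t \<in> E0"
  and eq: "m s f = f" "m f s = s" "m t h = h" "m h t = t" "m s t = s"
  shows "m s (m f h) = m f h \<and> m (m f h) s = s"
proof
  have "m s (m f h) = m (m s f) h" using mem by (simp add: asS)
  then show "m s (m f h) = m f h" using eq by simp
  have ts: "m t s = s" using mem eq E0comm by metis
  have "m (m f h) s = m (m f h) (m t s)" using ts by simp
  also have "\<dots> = m f (m (m h t) s)" using mem by (simp add: asS)
  also have "\<dots> = s" using eq ts by simp
  finally show "m (m f h) s = s" .
qed

lemma stepA: assumes x: "x \<in> E0" and g: "g \<in> ES" and y: "y \<in> E0" and gy: "m g y = g" "m y g = y"
  shows "m (m x g) (m x y) = m x g \<and> m (m x y) (m x g) = m x y"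
proof
  let ?a = "m x g" and ?xy = "m x y"
  have aS: "?a \<in> S" "?a \<in> ES" using x g by simp_all
  have xy: "?xy \<in> E0" using x y by simp
  have yx: "m y x = ?xy" using E0comm x y by metis
  have tba: "tb ?a = ?xy" using tmult[of x g] x g tb_T[of x] tI[OF g y gy] by simp
  let ?t = "tF ?a"
  have tR: "m ?xy ?t = ?t" "m ?t ?xy = ?xy" using tF_R[OF aS(1)] tba T.st_idem[OF xy] by simp_all
  have tES: "?t \<in> ES" using tF_in[OF aS(1)] .
  have Ls: "Lstar S m ?a ?t" using D1'[OF D4[OF aS(1)]] .
  have at: "m ?a ?t = ?a" "m ?t ?a = ?t" using Lstar_idems[OF Ls aS(2) tES] by simp_all
  have ay: "m ?a y = ?a"
  proof -
    have "m ?a y = m x (m g y)" using x g y by (simp add: asS)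
    then show ?thesis using gy by simp
  qed
  have ty: "m ?t y = ?t"
  proof -
    have "m ?t y = m (m ?t ?a) y" using at by simp
    also have "\<dots> = m ?t (m ?a y)" using tES x g y by (simp add: asS)
    also have "\<dots> = ?t" using ay at by simp
    finally show ?thesis .
  qed
  have tx: "m ?t x = ?xy"
  proof -
    have "m ?t x = m (m ?t y) x" using ty by simp
    also have "\<dots> = m ?t (m y x)" using tES x y by (simp add: asS)
    finally show ?thesis using tR yx by simp
  qed
  have "?t = m ?t ?a" using at by simp
  also have "\<dots> = m (m ?t x) g" using tES x g by (simp add: asS)
  also have "\<dots> = m ?xy g" using tx by simp
  also have "\<dots> = m x (m y g)" using x y g by (simp add: asS)
  also have "\<dots> = ?xy" using gy by simp
  finally have t: "?t = ?xy" .
  show "m ?a ?xy = ?a" using at t by simp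
  have "m ?xy ?a = m x (m (m y x) g)" using x y g by (simp add: asS)
  also have "\<dots> = m x (m ?xy g)" using yx by simp
  also have "\<dots> = m (m x x) (m y g)" using x y g by (simp add: asS)
  also have "\<dots> = ?xy" using x gy E0idem by simp
  finally show "m ?xy ?a = ?xy" .
qed

lemma stepA': assumes x: "x \<in> E0" and g: "g \<in> ES" and y: "y \<in> E0" and gy: "m y g = g" "m g y = y"
  shows "m (m x y) (m g x) = m g x \<and> m (m g x) (m x y) = m x y"
proof
  let ?a = "m g x" and ?xy = "m x y"
  have aS: "?a \<in> S" "?a \<in> ES" using x g by simp_all
  have xy: "?xy \<in> E0" using x y by simp
  have yx: "m y x = ?xy" using E0comm x y by metis
  have tba: "tb ?a = ?xy" using tmult[of g x] x g tb_T[of x] tL[OF g y gy] yx by simp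
  let ?k = "tE ?a"
  have kL: "m ?k ?xy = ?k" "m ?xy ?k = ?xy" using tE_L[OF aS(1)] tba T.pl_idem[OF xy] by simp_all
  have kES: "?k \<in> ES" using tE_in[OF aS(1)] .
  have Rs: "Rstar S m ?a ?k" using D1[OF D4[OF aS(1)]] .
  have ak: "m ?k ?a = ?a" "m ?a ?k = ?k" using Rstar_idems[OF Rs aS(2) kES] by simp_all
  have ya: "m y ?a = ?a"
  proof -
    have "m y ?a = m (m y g) x" using x g y by (simp add: asS)
    then show ?thesis using gy by simp
  qed
  have yk: "m y ?k = ?k"
  proof -
    have "m y ?k = m y (m ?a ?k)" using ak by simp
    also have "\<dots> = m (m y ?a) ?k" using kES x g y by (simp add: asS)
    also have "\<dots> = ?k" using ya ak by simp
    finally show ?thesis .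
  qed
  have xk: "m x ?k = ?xy"
  proof -
    have "m x ?k = m x (m y ?k)" using yk by simp
    also have "\<dots> = m ?xy ?k" using kES x y by (simp add: asS)
    finally show ?thesis using kL by simp
  qed
  have "?k = m ?a ?k" using ak by simp
  also have "\<dots> = m g (m x ?k)" using kES x g by (simp add: asS)
  also have "\<dots> = m g (m y x)" using xk yx by simp
  also have "\<dots> = m (m g y) x" using x y g by (simp add: asS)
  also have "\<dots> = ?xy" using gy yx by simp
  finally have k: "?k = ?xy" .
  show "m ?xy ?a = ?a" using ak k by simp
  have "m ?a ?xy = m g (m (m x x) y)" using x y g by (simp add: asS)
  also have "\<dots> = m g (m y x)" using x E0idem yx by simp
  also have "\<dots> = m (m g y) x" using x y g by (simp add: asS)
  also have "\<dots> = ?xy" using gy yx by simp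
  finally show "m ?a ?xy = ?xy" .
qed

lemma E0_zyz: assumes "z \<in> E0" "y \<in> E0" shows "m (m z y) z = m z y" "m z (m z y) = m z y"
  "m (m y z) z = m y z" "m z (m y z) = m y z"
proof -
  have yz: "m y z = m z y" using assms E0comm by metis
  have a: "m (m z y) z = m z y"
  proof -
    have "m (m z y) z = m z (m y z)" using assms by (simp add: asS)
    also have "\<dots> = m z (m z y)" using yz by simp
    also have "\<dots> = m (m z z) y" using assms by (simp add: asS)
    finally show ?thesis using assms E0idem by simp
  qed
  have b: "m z (m z y) = m z y"
  proof -
    have "m z (m z y) = m (m z z) y" using assms by (simp add: asS)
    then show ?thesis using assms E0idem by simp
  qed
  show "m (m z y) z = m z y" "m z (m z y) = m z y" using a b by simp_all
  show "m (m y z) z = m y z" "m z (m y z) = m y z" using a b yz by simp_all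
qed

lemma I0_ES: "e \<in> I0 \<Longrightarrow> e \<in> ES" using I0_iff by blast
lemma L0_ES: "e \<in> L0 \<Longrightarrow> e \<in> ES" using L0_iff by blast
lemma E0_I0: "z \<in> E0 \<Longrightarrow> z \<in> I0" using I0_iff E0idem by fastforce
lemma E0_L0: "z \<in> E0 \<Longrightarrow> z \<in> L0" using L0_iff E0idem by fastforce

lemma I0_mult_aux: assumes e: "e \<in> ES" "z \<in> E0" "m e z = e" "m z e = z"
  and g: "g \<in> ES" "y \<in> E0" "m g y = g" "m y g = y"
  shows "m (m e g) (m z y) = m e g \<and> m (m z y) (m e g) = m z y \<and> m (m e g) e = m e g"
proof -
  have A: "m (m z g) (m z y) = m z g" "m (m z y) (m z g) = m z y" using stepA[OF e(2) g] by simp_all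
  have zy: "m z y \<in> E0" using e g by simp
  have K: "m (m e (m z g)) (m z y) = m e (m z g) \<and> m (m z y) (m e (m z g)) = m z y"
    using K1[OF e(1) _ e(2) zy e(3,4) A E0_zyz(1)[OF e(2) g(2)]] e g by simp
  have eg: "m e g = m e (m z g)"
  proof -
    have "m e g = m (m e z) g" using e by simp
    also have "\<dots> = m e (m z g)" using e(1,2) g(1,2) by (simp add: asS)
    finally show ?thesis .
  qed
  have zgz: "m (m z g) z = m z g"
  proof -
    have "m (m z g) z = m (m (m z g) (m z y)) z" using A by simp
    also have "\<dots> = m (m z g) (m (m z y) z)" using e(1,2) g(1,2) by (simp add: asS)
    also have "\<dots> = m (m z g) (m z y)" using E0_zyz[OF e(2) g(2)] by simp
    finally show ?thesis using A by simp
  qed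
  have zge: "m (m z g) e = m z g"
  proof -
    have "m (m z g) e = m (m (m z g) z) e" using zgz by simp
    also have "\<dots> = m (m z g) (m z e)" using e(1,2) g(1,2) by (simp add: asS)
    finally show ?thesis using e zgz by simp
  qed
  have "m (m e g) e = m (m e (m z g)) e" using eg by simp
  also have "\<dots> = m e (m (m z g) e)" using e(1,2) g(1,2) by (simp add: asS)
  also have "\<dots> = m e g" using zge eg by simp
  finally show ?thesis using K eg by simp
qed

lemma I0_mult: assumes "e \<in> I0" "g \<in> I0" shows "m e g \<in> I0" "m (m e g) e = m e g"
proof -
  obtain z where e: "e \<in> ES" "z \<in> E0" "m e z = e" "m z e = z" using assms(1) I0_iff by blast
  obtain y where g: "g \<in> ES" "y \<in> E0" "m g y = g" "m y g = y" using assms(2) I0_iff by blast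
  have "m (m e g) (m z y) = m e g \<and> m (m z y) (m e g) = m z y \<and> m (m e g) e = m e g"
    using I0_mult_aux[OF e g] .
  then show "m e g \<in> I0" "m (m e g) e = m e g" using I0_iff e g by auto
qed

lemma L0_mult_aux: assumes f: "f \<in> ES" "z \<in> E0" "m z f = f" "m f z = z"
  and h: "h \<in> ES" "y \<in> E0" "m y h = h" "m h y = y"
  shows "m (m y z) (m f h) = m f h \<and> m (m f h) (m y z) = m y z \<and> m (m f h) f = m h f"
proof -
  have A: "m (m y z) (m f y) = m f y" "m (m f y) (m y z) = m y z" using stepA'[OF h(2) f] by simp_all
  have yz: "m y z \<in> E0" using f h by simp
  have yzy: "m (m y z) y = m y z" using E0_zyz(1)[OF h(2) f(2)] .
  have K: "m (m y z) (m (m f y) h) = m (m f y) h \<and> m (m (m f y) h) (m y z) = m y z"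
    using K1'[OF _ h(1) yz h(2) A h(3,4) yzy] f h by simp
  have fh: "m f h = m (m f y) h"
  proof -
    have "m f h = m f (m y h)" using h by simp
    also have "\<dots> = m (m f y) h" using f(1,2) h(1,2) by (simp add: asS)
    finally show ?thesis .
  qed
  have A2: "m (m z y) (m h z) = m h z" "m (m h z) (m z y) = m z y" using stepA'[OF f(2) h] by simp_all
  have zy: "m z y = m y z" using f h E0comm by metis
  have fhz: "m f (m h z) = m h z"
  proof -
    have "m f (m h z) = m f (m (m z y) (m h z))" using A2 by simp
    also have "\<dots> = m (m (m f z) y) (m h z)" using f(1,2) h(1,2) by (simp add: asS)
    also have "\<dots> = m (m z y) (m h z)" using f by simp
    finally show ?thesis using A2 by simp
  qed
  have "m (m f h) f = m (m f h) (m z f)" using f by simp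
  also have "\<dots> = m (m f (m h z)) f" using f(1,2) h(1,2) by (simp add: asS)
  also have "\<dots> = m (m h z) f" using fhz by simp
  also have "\<dots> = m h (m z f)" using f(1,2) h(1,2) by (simp add: asS)
  also have "\<dots> = m h f" using f by simp
  finally show ?thesis using K fh by simp
qed

lemma L0_mult: assumes "f \<in> L0" "h \<in> L0" shows "m f h \<in> L0" "m (m f h) f = m h f"
proof -
  obtain z where f: "f \<in> ES" "z \<in> E0" "m z f = f" "m f z = z" using assms(1) L0_iff by blast
  obtain y where h: "h \<in> ES" "y \<in> E0" "m y h = h" "m h y = y" using assms(2) L0_iff by blast
  have "m (m y z) (m f h) = m f h \<and> m (m f h) (m y z) = m y z \<and> m (m f h) f = m h f"
    using L0_mult_aux[OF f h] .
  then show "m f h \<in> L0" "m (m f h) f = m h f" using L0_iff f h by auto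
qed

lemma I0_lrb: "left_regular_band I0 m"
  unfolding left_regular_band_def band_def sgrp_def
  using I0_mult I0_ES ESidem by (auto simp: asS)

lemma L0_rrb: "right_regular_band L0 m"
  unfolding right_regular_band_def band_def sgrp_def
  using L0_mult L0_ES ESidem by (auto simp: asS)

lemma sgI0: "sgrp I0 m" using I0_lrb by (simp add: left_regular_band_def band_def)
lemma sgL0: "sgrp L0 m" using L0_rrb by (simp add: right_regular_band_def band_def)

lemma idemsI0: "e \<in> I0 \<Longrightarrow> e \<in> idems I0 m" unfolding idems_def using ESidem[OF I0_ES] by blast
lemma idemsL0: "e \<in> L0 \<Longrightarrow> e \<in> idems L0 m" unfolding idems_def using ESidem[OF L0_ES] by blast

lemma LL_iff: assumes z: "z \<in> E0" shows "e \<in> Lcl I0 m z \<longleftrightarrow> e \<in> I0 \<and> m e z = e \<and> m z e = z"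
proof (cases "e \<in> I0")
  case True
  have "GL I0 m e z \<longleftrightarrow> m e z = e \<and> m z e = z"
    by (rule GL_idem[OF sgI0 idemsI0[OF True] idemsI0[OF E0_I0[OF z]]])
  then show ?thesis using True by (simp add: Lcl_def)
next
  case False then show ?thesis by (simp add: Lcl_def GL_def)
qed

lemma RR_iff: assumes z: "z \<in> E0" shows "f \<in> Rcl L0 m z \<longleftrightarrow> f \<in> L0 \<and> m z f = f \<and> m f z = z"
proof (cases "f \<in> L0")
  case True
  have "GR L0 m f z \<longleftrightarrow> m z f = f \<and> m f z = z"
    by (rule GR_idem[OF sgL0 idemsL0[OF True] idemsL0[OF E0_L0[OF z]]])
  then show ?thesis using True by (simp add: Rcl_def)
next
  case False then show ?thesis by (simp add: Rcl_def GR_def)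
qed

lemma I0_un: "I0 = (\<Union>x\<in>E0. Lcl I0 m x)"
proof
  show "I0 \<subseteq> (\<Union>x\<in>E0. Lcl I0 m x)"
  proof
    fix e assume e: "e \<in> I0"
    then obtain z where "z \<in> E0" "m e z = e" "m z e = z" using I0_iff by blast
    then show "e \<in> (\<Union>x\<in>E0. Lcl I0 m x)" using LL_iff e by blast
  qed
  show "(\<Union>x\<in>E0. Lcl I0 m x) \<subseteq> I0" using LL_iff by blast
qed

lemma L0_un: "L0 = (\<Union>x\<in>E0. Rcl L0 m x)"
proof
  show "L0 \<subseteq> (\<Union>x\<in>E0. Rcl L0 m x)"
  proof
    fix e assume e: "e \<in> L0"
    then obtain z where "z \<in> E0" "m z e = e" "m e z = z" using L0_iff by blast
    then show "e \<in> (\<Union>x\<in>E0. Rcl L0 m x)" using RR_iff e by blast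
  qed
  show "(\<Union>x\<in>E0. Rcl L0 m x) \<subseteq> L0" using RR_iff by blast
qed

lemma inv_unique: assumes e: "e \<in> ES" and z: "z \<in> E0" "m e z = e" "m z e = z"
  and y: "y \<in> E0" "m (m e y) e = e" "m (m y e) y = y"
  shows "y = z"
proof -
  let ?w = "m z y"
  have w: "?w \<in> E0" using z y by simp
  have we: "m ?w e = z"
  proof -
    have "m z (m (m e y) e) = z" using y(2) z(3) by simp
    moreover have "m z (m (m e y) e) = m (m (m z e) y) e" using e z(1) y(1) by (simp add: asS)
    ultimately show ?thesis using z(3) by simp
  qed
  have wz: "m ?w z = ?w" using E0_zyz(1)[OF z(1) y(1)] .
  have "?w = m ?w (m ?w e)" using wz we by simp
  also have "\<dots> = m (m ?w ?w) e" using w e by (simp add: asS)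
  also have "\<dots> = z" using we E0idem[OF w] by simp
  finally have zy: "m z y = z" by simp
  have yz_eq: "m y z = m y e"
  proof -
    have "m y z = m (m (m y e) y) z" using y(3) by simp
    also have "\<dots> = m (m y e) (m y z)" using e z(1) y(1) by (simp add: asS)
    also have "\<dots> = m (m y e) z" using zy E0comm[OF y(1) z(1)] by simp
    also have "\<dots> = m y (m e z)" using e z(1) y(1) by (simp add: asS)
    finally show ?thesis using z(2) by simp
  qed
  have "y = m (m y e) y" using y(3) by simp
  also have "\<dots> = m (m y z) y" using yz_eq by simp
  also have "\<dots> = m y z" using E0_zyz(3)[OF y(1) z(1)] E0comm[OF y(1) z(1)] E0_zyz(1)[OF y(1) z(1)] by simp
  also have "\<dots> = z" using zy E0comm[OF y(1) z(1)] by simp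
  finally show ?thesis .
qed

lemma inv_unique': assumes f: "f \<in> ES" and z: "z \<in> E0" "m z f = f" "m f z = z"
  and y: "y \<in> E0" "m (m f y) f = f" "m (m y f) y = y"
  shows "y = z"
proof -
  let ?w = "m y z"
  have w: "?w \<in> E0" using z y by simp
  have fw: "m f ?w = z"
  proof -
    have "m (m (m f y) f) z = z" using y(2) z(3) by simp
    moreover have "m (m (m f y) f) z = m f (m y (m f z))" using f z(1) y(1) by (simp add: asS)
    ultimately show ?thesis using z(3) f z(1) y(1) by (simp add: asS)
  qed
  have zw: "m z ?w = ?w" using E0_zyz(4)[OF z(1) y(1)] .
  have "?w = m (m f ?w) ?w" using zw fw by simp
  also have "\<dots> = m f (m ?w ?w)" using w f by (simp add: asS)
  also have "\<dots> = z" using fw E0idem[OF w] by simp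
  finally have yz: "m y z = z" by simp
  have zy_eq: "m z y = m f y"
  proof -
    have "m z y = m z (m (m y f) y)" using y(3) by simp
    also have "\<dots> = m (m z y) (m f y)" using f z(1) y(1) by (simp add: asS)
    also have "\<dots> = m z (m f y)" using yz E0comm[OF y(1) z(1)] by simp
    also have "\<dots> = m (m z f) y" using f z(1) y(1) by (simp add: asS)
    finally show ?thesis using z(2) by simp
  qed
  have "y = m y (m f y)" using y(3) f y(1) by (simp add: asS)
  also have "\<dots> = m y (m z y)" using zy_eq by simp
  also have "\<dots> = m z y" using E0_zyz(4)[OF y(1) z(1)] by simp
  also have "\<dots> = z" using yz E0comm[OF y(1) z(1)] by simp
  finally show ?thesis .
qed

lemma slt_I0: "semilattice_transversal I0 m E0"
  unfolding semilattice_transversal_def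
proof (intro conjI ballI)
  show "E0 \<subseteq> I0" using E0_I0 by blast
  fix x y assume "x \<in> E0" "y \<in> E0"
  then show "m x y \<in> E0" "m x y = m y x" using E0comm by simp_all
next
  fix e assume e: "e \<in> I0"
  then obtain z where z: "z \<in> E0" "m e z = e" "m z e = z" using I0_iff by blast
  have eE: "e \<in> ES" using I0_ES[OF e] .
  show "\<exists>!e0. e0 \<in> E0 \<and> inverse_in m e e0"
  proof
    show "z \<in> E0 \<and> inverse_in m e z" using z eE ESidem E0idem by (simp add: inverse_in_def)
    fix y assume "y \<in> E0 \<and> inverse_in m e y"
    then show "y = z" using inv_unique[OF eE z] by (simp add: inverse_in_def)
  qed
qed

lemma slt_L0: "semilattice_transversal L0 m E0"
  unfolding semilattice_transversal_def
proof (intro conjI ballI)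
  show "E0 \<subseteq> L0" using E0_L0 by blast
  fix x y assume "x \<in> E0" "y \<in> E0"
  then show "m x y \<in> E0" "m x y = m y x" using E0comm by simp_all
next
  fix e assume e: "e \<in> L0"
  then obtain z where z: "z \<in> E0" "m z e = e" "m e z = z" using L0_iff by blast
  have eE: "e \<in> ES" using L0_ES[OF e] .
  show "\<exists>!e0. e0 \<in> E0 \<and> inverse_in m e e0"
  proof
    show "z \<in> E0 \<and> inverse_in m e z" using z eE ESidem E0idem by (simp add: inverse_in_def)
    fix y assume "y \<in> E0 \<and> inverse_in m e y"
    then show "y = z" using inv_unique'[OF eE z] by (simp add: inverse_in_def)
  qed
qed

definition "al x y f g = tE (m (m (m x f) g) y)"
definition "be x y f g = tF (m (m (m x f) g) y)"

lemma tE_I0: "x \<in> S \<Longrightarrow> tE x \<in> I0" by (simp add: I0_def Iset_def)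
lemma tF_L0: "x \<in> S \<Longrightarrow> tF x \<in> L0" by (simp add: L0_def Lamset_def)

lemma W_dec: assumes x: "x \<in> T" and y: "y \<in> T"
  and f: "f \<in> ES" "m (T.st x) f = f" "m f (T.st x) = T.st x"
  and g: "g \<in> ES" "m g (T.pl y) = g" "m (T.pl y) g = T.pl y"
  shows "tb (m (m (m x f) g) y) = m x y"
    "m (m (m x f) g) y = m (m (al x y f g) (m x y)) (be x y f g)"
    "al x y f g \<in> ES" "be x y f g \<in> ES" "al x y f g \<in> I0" "be x y f g \<in> L0"
    "m (al x y f g) (T.pl (m x y)) = al x y f g" "m (T.pl (m x y)) (al x y f g) = T.pl (m x y)"
    "m (T.st (m x y)) (be x y f g) = be x y f g" "m (be x y f g) (T.st (m x y)) = T.st (m x y)"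
proof -
  let ?P = "m (m (m x f) g) y"
  have PS: "?P \<in> S" using x y f g by simp
  have tf: "tb f = T.st x" using tL[OF f(1) stE0[OF x] f(2,3)] by simp
  have tg: "tb g = T.pl y" using tI[OF g(1) plE0[OF y] g(2,3)] by simp
  have "tb ?P = m (m (m (tb x) (tb f)) (tb g)) (tb y)"
    using tmult x y f g by simp
  also have "\<dots> = m (m (m x (T.st x)) (T.pl y)) y" using tf tg tb_T x y by simp
  also have "\<dots> = m (m x (T.pl y)) y" using T.st_right x by simp
  also have "\<dots> = m x (m (T.pl y) y)" using x y by (simp add: asS)
  also have "\<dots> = m x y" using T.pl_left y by simp
  finally show tP: "tb ?P = m x y" .
  show "?P = m (m (al x y f g) (m x y)) (be x y f g)"
    using t_eq[OF PS] tP by (simp add: al_def be_def)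
  show "al x y f g \<in> ES" "be x y f g \<in> ES" "al x y f g \<in> I0" "be x y f g \<in> L0"
    using tE_in[OF PS] tF_in[OF PS] tE_I0[OF PS] tF_L0[OF PS] by (simp_all add: al_def be_def)
  show "m (al x y f g) (T.pl (m x y)) = al x y f g" "m (T.pl (m x y)) (al x y f g) = T.pl (m x y)"
    "m (T.st (m x y)) (be x y f g) = be x y f g" "m (be x y f g) (T.st (m x y)) = T.st (m x y)"
    using tE_L[OF PS] tF_R[OF PS] tP by (simp_all add: al_def be_def)
qed

lemma c_map: "\<forall>x\<in>T. \<forall>y\<in>T. \<forall>f\<in>Rcl L0 m (T.st x). \<forall>g\<in>Lcl I0 m (T.pl y).
        al x y f g \<in> Lcl I0 m (T.pl (m x y)) \<and> be x y f g \<in> Rcl L0 m (T.st (m x y))"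
proof (intro ballI)
  fix x y f g assume x: "x \<in> T" and y: "y \<in> T" and f: "f \<in> Rcl L0 m (T.st x)" and g: "g \<in> Lcl I0 m (T.pl y)"
  have f': "f \<in> ES" "m (T.st x) f = f" "m f (T.st x) = T.st x" using f RR_iff[of "T.st x" f] x L0_ES by auto
  have g': "g \<in> ES" "m g (T.pl y) = g" "m (T.pl y) g = T.pl y" using g LL_iff[of "T.pl y" g] y I0_ES by auto
  note W = W_dec[OF x y f' g']
  show "al x y f g \<in> Lcl I0 m (T.pl (m x y)) \<and> be x y f g \<in> Rcl L0 m (T.st (m x y))"
    using W LL_iff[of "T.pl (m x y)"] RR_iff[of "T.st (m x y)"] x y by simp
qed

lemma c_2: "\<forall>x\<in>T. \<forall>y\<in>T. al x y (T.st x) (T.pl y) = T.pl (m x y) \<and> be x y (T.st x) (T.pl y) = T.st (m x y)"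
proof (intro ballI)
  fix x y assume x: "x \<in> T" and y: "y \<in> T"
  have "m (m (m x (T.st x)) (T.pl y)) y = m x y"
    using x y T.st_right T.pl_left by (simp add: asS)
  then show "al x y (T.st x) (T.pl y) = T.pl (m x y) \<and> be x y (T.st x) (T.pl y) = T.st (m x y)"
    using tb_T[of "m x y"] x y by (simp add: al_def be_def)
qed

lemma RRD: "x \<in> T \<Longrightarrow> f \<in> Rcl L0 m (T.st x) \<Longrightarrow> f \<in> ES \<and> m (T.st x) f = f \<and> m f (T.st x) = T.st x"
  using RR_iff[of "T.st x" f] L0_ES by auto
lemma LLD: "y \<in> T \<Longrightarrow> g \<in> Lcl I0 m (T.pl y) \<Longrightarrow> g \<in> ES \<and> m g (T.pl y) = g \<and> m (T.pl y) g = T.pl y"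
  using LL_iff[of "T.pl y" g] I0_ES by auto

lemma c_1: "\<forall>x\<in>T. \<forall>y\<in>T. \<forall>z\<in>T. \<forall>f\<in>Rcl L0 m (T.st x). \<forall>g\<in>Lcl I0 m (T.pl y).
   \<forall>h\<in>Rcl L0 m (T.st y). \<forall>k\<in>Lcl I0 m (T.pl z).
        m (al x y f g) (al (m x y) z (m (be x y f g) h) k)
          = al x (m y z) f (m g (al y z h k)) \<and>
        m (be x (m y z) f (m g (al y z h k))) (be y z h k)
          = be (m x y) z (m (be x y f g) h) k"
proof (intro ballI)
  fix x y z f g h k assume x: "x \<in> T" and y: "y \<in> T" and z: "z \<in> T"
    and f0: "f \<in> Rcl L0 m (T.st x)" and g0: "g \<in> Lcl I0 m (T.pl y)"
    and h0: "h \<in> Rcl L0 m (T.st y)" and k0: "k \<in> Lcl I0 m (T.pl z)"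
  have f: "f \<in> ES" "m (T.st x) f = f" "m f (T.st x) = T.st x" using RRD[OF x f0] by auto
  have g: "g \<in> ES" "m g (T.pl y) = g" "m (T.pl y) g = T.pl y" using LLD[OF y g0] by auto
  have h: "h \<in> ES" "m (T.st y) h = h" "m h (T.st y) = T.st y" using RRD[OF y h0] by auto
  have k: "k \<in> ES" "m k (T.pl z) = k" "m (T.pl z) k = T.pl z" using LLD[OF z k0] by auto
  have xy: "m x y \<in> T" and yz: "m y z \<in> T" and xyz: "m (m x y) z \<in> T" using x y z by simp_all
  have axyz: "m x (m y z) = m (m x y) z" using x y z by (simp add: asS)
  note W1 = W_dec[OF x y f g]
  let ?A1 = "al x y f g" and ?B1 = "be x y f g"
  let ?h2 = "m ?B1 h"
  have h2: "?h2 \<in> ES" "m (T.st (m x y)) ?h2 = ?h2" "m ?h2 (T.st (m x y)) = T.st (m x y)"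
    using K1'[OF W1(4) h(1) stE0[OF xy] stE0[OF y] W1(9,10) h(2,3) T.st_prod[OF x y]]
      W1(4) h(1) by simp_all
  note W2 = W_dec[OF xy z h2 k]
  let ?A2 = "al (m x y) z ?h2 k" and ?B2 = "be (m x y) z ?h2 k"
  note W3 = W_dec[OF y z h k]
  let ?A3 = "al y z h k" and ?B3 = "be y z h k"
  let ?g2 = "m g ?A3"
  have g2: "?g2 \<in> ES" "m ?g2 (T.pl (m y z)) = ?g2" "m (T.pl (m y z)) ?g2 = T.pl (m y z)"
    using K1[OF g(1) W3(3) plE0[OF y] plE0[OF yz] g(2,3) W3(7,8) T.pl_prod'[OF y z]]
      g(1) W3(3) by simp_all
  note W4 = W_dec[OF x yz f g2]
  let ?A4 = "al x (m y z) f ?g2" and ?B4 = "be x (m y z) f ?g2"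
  let ?P = "m (m (m (m (m (m x f) g) y) h) k) z"
  have mem: "x \<in> S" "y \<in> S" "z \<in> S" "f \<in> S" "g \<in> S" "h \<in> S" "k \<in> S"
    "?A1 \<in> S" "?B1 \<in> S" "?A2 \<in> S" "?B2 \<in> S" "?A3 \<in> S" "?B3 \<in> S" "?A4 \<in> S" "?B4 \<in> S"
    using x y z f g h k W1 W2 W3 W4 by simp_all
  have "?P = m (m (m (m x f) g) y) (m (m h k) z)" using mem by (simp add: asS)
  also have "\<dots> = m (m (m ?A1 (m x y)) ?B1) (m (m h k) z)" using W1(2) by simp
  also have "\<dots> = m ?A1 (m (m (m (m x y) ?h2) k) z)" using mem by (simp add: asS)
  also have "\<dots> = m ?A1 (m (m ?A2 (m (m x y) z)) ?B2)" using W2(2) by simp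
  also have "\<dots> = m (m (m ?A1 ?A2) (m (m x y) z)) ?B2" using mem by (simp add: asS)
  finally have LP: "?P = m (m (m ?A1 ?A2) (m (m x y) z)) ?B2" .
  have "?P = m (m (m x f) g) (m (m (m y h) k) z)" using mem by (simp add: asS)
  also have "\<dots> = m (m (m x f) g) (m (m ?A3 (m y z)) ?B3)" using W3(2) by simp
  also have "\<dots> = m (m (m (m x f) ?g2) (m y z)) ?B3" using mem by (simp add: asS)
  also have "\<dots> = m (m (m ?A4 (m x (m y z))) ?B4) ?B3" using W4(2) by simp
  also have "\<dots> = m (m ?A4 (m x (m y z))) (m ?B4 ?B3)" using mem by (simp add: asS)
  finally have RP: "?P = m (m ?A4 (m (m x y) z)) (m ?B4 ?B3)" using axyz by simp
  have K: "m (m ?A1 ?A2) (T.pl (m (m x y) z)) = m ?A1 ?A2 \<and> m (T.pl (m (m x y) z)) (m ?A1 ?A2) = T.pl (m (m x y) z)"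
    by (rule K1[OF W1(3) W2(3) plE0[OF xy] plE0[OF xyz] W1(7,8) W2(7,8) T.pl_prod'[OF xy z]])
  have D1: "tE ?P = m ?A1 ?A2 \<and> tF ?P = ?B2"
    using Dmk[OF xyz _ W2(4)] K W2(9,10) W1(3) W2(3) LP by simp
  have K': "m (T.st (m x (m y z))) (m ?B4 ?B3) = m ?B4 ?B3 \<and> m (m ?B4 ?B3) (T.st (m x (m y z))) = T.st (m x (m y z))"
    by (rule K1'[OF W4(4) W3(4) stE0[OF clT[OF x yz]] stE0[OF yz] W4(9,10) W3(9,10) T.st_prod[OF x yz]])
  have D2: "tE ?P = ?A4 \<and> tF ?P = m ?B4 ?B3"
    using Dmk[OF xyz W4(3)] K' W4(7,8) W4(4) W3(4) RP axyz by simp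
  show "m ?A1 ?A2 = ?A4 \<and> m ?B4 ?B3 = ?B2" using D1 D2 by simp
qed

lemma c3_aux: assumes x: "x \<in> T" and xi: "xi \<in> T"
  and ei: "ei \<in> ES" "m ei (T.pl xi) = ei" "m (T.pl xi) ei = T.pl xi"
  and fi: "fi \<in> ES" "m (T.st xi) fi = fi" "m fi (T.st xi) = T.st xi"
  and e: "e \<in> ES" "m e (T.pl x) = e" "m (T.pl x) e = T.pl x"
  shows "m (m (m ei xi) fi) (m (m e x) (T.st x)) =
      m (m (m ei (al xi x fi e)) (m xi x)) (m (be xi x fi e) (T.st x))"
    "tE (m (m (m ei xi) fi) e) = m ei (al xi (T.pl x) fi e)"
    "tb (m (m (m ei xi) fi) e) = m xi (T.pl x)"
    "tF (m (m (m ei xi) fi) e) = be xi (T.pl x) fi e"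
proof -
  note W = W_dec[OF xi x fi e]
  have px: "T.pl x \<in> T" using x by simp
  have e': "e \<in> ES" "m e (T.pl (T.pl x)) = e" "m (T.pl (T.pl x)) e = T.pl (T.pl x)"
    using e T.pl_idem[OF plE0[OF x]] by simp_all
  note W' = W_dec[OF xi px fi e']
  have mem: "x \<in> S" "xi \<in> S" "ei \<in> S" "fi \<in> S" "e \<in> S" "T.pl x \<in> S" "T.st x \<in> S"
    "al xi x fi e \<in> S" "be xi x fi e \<in> S" "al xi (T.pl x) fi e \<in> S" "be xi (T.pl x) fi e \<in> S"
    using x xi ei fi e W W' by simp_all
  have "m (m (m ei xi) fi) (m (m e x) (T.st x)) = m (m ei (m (m (m xi fi) e) x)) (T.st x)"
    using mem by (simp add: asS)
  also have "\<dots> = m (m ei (m (m (al xi x fi e) (m xi x)) (be xi x fi e))) (T.st x)" using W(2) by simp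
  also have "\<dots> = m (m (m ei (al xi x fi e)) (m xi x)) (m (be xi x fi e) (T.st x))"
    using mem by (simp add: asS)
  finally show "m (m (m ei xi) fi) (m (m e x) (T.st x)) =
      m (m (m ei (al xi x fi e)) (m xi x)) (m (be xi x fi e) (T.st x))" .
  have "m (m (m ei xi) fi) e = m (m (m ei xi) fi) (m e (T.pl x))" using e by simp
  also have "\<dots> = m ei (m (m (m xi fi) e) (T.pl x))" using mem by (simp add: asS)
  also have "\<dots> = m ei (m (m (al xi (T.pl x) fi e) (m xi (T.pl x))) (be xi (T.pl x) fi e))"
    using W'(2) by simp
  also have "\<dots> = m (m (m ei (al xi (T.pl x) fi e)) (m xi (T.pl x))) (be xi (T.pl x) fi e)"
    using mem by (simp add: asS)
  finally have U: "m (m (m ei xi) fi) e = m (m (m ei (al xi (T.pl x) fi e)) (m xi (T.pl x))) (be xi (T.pl x) fi e)" .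
  have xpx: "m xi (T.pl x) \<in> T" using xi x by simp
  have K: "m (m ei (al xi (T.pl x) fi e)) (T.pl (m xi (T.pl x))) = m ei (al xi (T.pl x) fi e) \<and>
     m (T.pl (m xi (T.pl x))) (m ei (al xi (T.pl x) fi e)) = T.pl (m xi (T.pl x))"
    by (rule K1[OF ei(1) W'(3) plE0[OF xi] plE0[OF xpx] ei(2,3) W'(7,8) T.pl_prod'[OF xi px]])
  have "tb (m (m (m ei xi) fi) e) = m xi (T.pl x) \<and> tE (m (m (m ei xi) fi) e) = m ei (al xi (T.pl x) fi e)
      \<and> tF (m (m (m ei xi) fi) e) = be xi (T.pl x) fi e"
    unfolding U by (rule Dmk[OF xpx _ W'(4) _ _ W'(9,10)]) (use K ei(1) W'(3) in simp_all)
  then show "tE (m (m (m ei xi) fi) e) = m ei (al xi (T.pl x) fi e)"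
    "tb (m (m (m ei xi) fi) e) = m xi (T.pl x)"
    "tF (m (m (m ei xi) fi) e) = be xi (T.pl x) fi e" by simp_all
qed

lemma c_3: "\<forall>x\<in>T. \<forall>x1\<in>T. \<forall>x2\<in>T. \<forall>e1\<in>Lcl I0 m (T.pl x1). \<forall>f1\<in>Rcl L0 m (T.st x1).
        \<forall>e2\<in>Lcl I0 m (T.pl x2). \<forall>f2\<in>Rcl L0 m (T.st x2). \<forall>e\<in>Lcl I0 m (T.pl x).
        m e1 (al x1 x f1 e) = m e2 (al x2 x f2 e) \<and> m x1 x = m x2 x \<and>
        m (be x1 x f1 e) (T.st x) = m (be x2 x f2 e) (T.st x) \<longrightarrow>
        m e1 (al x1 (T.pl x) f1 e) = m e2 (al x2 (T.pl x) f2 e) \<and> m x1 (T.pl x) = m x2 (T.pl x) \<and>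
        be x1 (T.pl x) f1 e = be x2 (T.pl x) f2 e"
proof (intro ballI impI)
  fix x x1 x2 e1 f1 e2 f2 e assume x: "x \<in> T" and x1: "x1 \<in> T" and x2: "x2 \<in> T"
    and e10: "e1 \<in> Lcl I0 m (T.pl x1)" and f10: "f1 \<in> Rcl L0 m (T.st x1)"
    and e20: "e2 \<in> Lcl I0 m (T.pl x2)" and f20: "f2 \<in> Rcl L0 m (T.st x2)"
    and e0: "e \<in> Lcl I0 m (T.pl x)"
    and hyp: "m e1 (al x1 x f1 e) = m e2 (al x2 x f2 e) \<and> m x1 x = m x2 x \<and>
        m (be x1 x f1 e) (T.st x) = m (be x2 x f2 e) (T.st x)"
  have e1: "e1 \<in> ES" "m e1 (T.pl x1) = e1" "m (T.pl x1) e1 = T.pl x1" using LLD[OF x1 e10] by auto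
  have e2: "e2 \<in> ES" "m e2 (T.pl x2) = e2" "m (T.pl x2) e2 = T.pl x2" using LLD[OF x2 e20] by auto
  have e: "e \<in> ES" "m e (T.pl x) = e" "m (T.pl x) e = T.pl x" using LLD[OF x e0] by auto
  have f1: "f1 \<in> ES" "m (T.st x1) f1 = f1" "m f1 (T.st x1) = T.st x1" using RRD[OF x1 f10] by auto
  have f2: "f2 \<in> ES" "m (T.st x2) f2 = f2" "m f2 (T.st x2) = T.st x2" using RRD[OF x2 f20] by auto
  note A1 = c3_aux[OF x x1 e1 f1 e] and A2 = c3_aux[OF x x2 e2 f2 e]
  let ?Q = "m (m e x) (T.st x)"
  have dQ: "decomp S m T ?Q e x (T.st x)"
    using x e E0idem[OF stE0[OF x]] by (simp add: decomp_iff)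
  have u1: "m (m e1 x1) f1 \<in> S" and u2: "m (m e2 x2) f2 \<in> S" using e1 e2 x1 x2 f1 f2 by simp_all
  have "m (m (m e1 x1) f1) ?Q = m (m (m e2 x2) f2) ?Q" using A1(1) A2(1) hyp by simp
  then have eq: "m (m (m e1 x1) f1) e = m (m (m e2 x2) f2) e"
    using Rstar_cancel[OF D1[OF dQ] u1 u2] by simp
  show "m e1 (al x1 (T.pl x) f1 e) = m e2 (al x2 (T.pl x) f2 e) \<and> m x1 (T.pl x) = m x2 (T.pl x) \<and>
        be x1 (T.pl x) f1 e = be x2 (T.pl x) f2 e"
    using A1(2-4) A2(2-4) eq by metis
qed

lemma c4_aux: assumes x: "x \<in> T" and xi: "xi \<in> T"
  and ei: "ei \<in> ES" "m ei (T.pl xi) = ei" "m (T.pl xi) ei = T.pl xi"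
  and fi: "fi \<in> ES" "m (T.st xi) fi = fi" "m fi (T.st xi) = T.st xi"
  and f: "f \<in> ES" "m (T.st x) f = f" "m f (T.st x) = T.st x"
  shows "m (m (m (T.pl x) x) f) (m (m ei xi) fi) =
      m (m (m (T.pl x) (al x xi f ei)) (m x xi)) (m (be x xi f ei) fi)"
    "tE (m f (m (m ei xi) fi)) = al (T.st x) xi f ei"
    "tb (m f (m (m ei xi) fi)) = m (T.st x) xi"
    "tF (m f (m (m ei xi) fi)) = m (be (T.st x) xi f ei) fi"
proof -
  note W = W_dec[OF x xi f ei]
  have sx: "T.st x \<in> T" using x by simp
  have f': "f \<in> ES" "m (T.st (T.st x)) f = f" "m f (T.st (T.st x)) = T.st (T.st x)"
    using f T.st_idem[OF stE0[OF x]] by simp_all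
  note W' = W_dec[OF sx xi f' ei]
  have mem: "x \<in> S" "xi \<in> S" "ei \<in> S" "fi \<in> S" "f \<in> S" "T.pl x \<in> S" "T.st x \<in> S"
    "al x xi f ei \<in> S" "be x xi f ei \<in> S" "al (T.st x) xi f ei \<in> S" "be (T.st x) xi f ei \<in> S"
    using x xi ei fi f W W' by simp_all
  have "m (m (m (T.pl x) x) f) (m (m ei xi) fi) = m (m (T.pl x) (m (m (m x f) ei) xi)) fi"
    using mem by (simp add: asS)
  also have "\<dots> = m (m (T.pl x) (m (m (al x xi f ei) (m x xi)) (be x xi f ei))) fi" using W(2) by simp
  also have "\<dots> = m (m (m (T.pl x) (al x xi f ei)) (m x xi)) (m (be x xi f ei) fi)"
    using mem by (simp add: asS)
  finally show "m (m (m (T.pl x) x) f) (m (m ei xi) fi) =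
      m (m (m (T.pl x) (al x xi f ei)) (m x xi)) (m (be x xi f ei) fi)" .
  have "m f (m (m ei xi) fi) = m (m (T.st x) f) (m (m ei xi) fi)" using f by simp
  also have "\<dots> = m (m (m (m (T.st x) f) ei) xi) fi" using mem by (simp add: asS)
  also have "\<dots> = m (m (m (al (T.st x) xi f ei) (m (T.st x) xi)) (be (T.st x) xi f ei)) fi"
    using W'(2) by simp
  also have "\<dots> = m (m (al (T.st x) xi f ei) (m (T.st x) xi)) (m (be (T.st x) xi f ei) fi)"
    using mem by (simp add: asS)
  finally have U: "m f (m (m ei xi) fi) = m (m (al (T.st x) xi f ei) (m (T.st x) xi)) (m (be (T.st x) xi f ei) fi)" .
  have sxi: "m (T.st x) xi \<in> T" using xi x by simp
  have K: "m (T.st (m (T.st x) xi)) (m (be (T.st x) xi f ei) fi) = m (be (T.st x) xi f ei) fi \<and>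
     m (m (be (T.st x) xi f ei) fi) (T.st (m (T.st x) xi)) = T.st (m (T.st x) xi)"
    by (rule K1'[OF W'(4) fi(1) stE0[OF sxi] stE0[OF xi] W'(9,10) fi(2,3) T.st_prod[OF sx xi]])
  have "tb (m f (m (m ei xi) fi)) = m (T.st x) xi \<and> tE (m f (m (m ei xi) fi)) = al (T.st x) xi f ei
      \<and> tF (m f (m (m ei xi) fi)) = m (be (T.st x) xi f ei) fi"
    unfolding U by (rule Dmk[OF sxi W'(3) _ W'(7,8)]) (use K fi(1) W'(4) in simp_all)
  then show "tE (m f (m (m ei xi) fi)) = al (T.st x) xi f ei"
    "tb (m f (m (m ei xi) fi)) = m (T.st x) xi"
    "tF (m f (m (m ei xi) fi)) = m (be (T.st x) xi f ei) fi" by simp_all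
qed

lemma c_4: "\<forall>x\<in>T. \<forall>x1\<in>T. \<forall>x2\<in>T. \<forall>e1\<in>Lcl I0 m (T.pl x1). \<forall>f1\<in>Rcl L0 m (T.st x1).
        \<forall>e2\<in>Lcl I0 m (T.pl x2). \<forall>f2\<in>Rcl L0 m (T.st x2). \<forall>f\<in>Rcl L0 m (T.st x).
        m (T.pl x) (al x x1 f e1) = m (T.pl x) (al x x2 f e2) \<and> m x x1 = m x x2 \<and>
        m (be x x1 f e1) f1 = m (be x x2 f e2) f2 \<longrightarrow>
        al (T.st x) x1 f e1 = al (T.st x) x2 f e2 \<and> m (T.st x) x1 = m (T.st x) x2 \<and>
        m (be (T.st x) x1 f e1) f1 = m (be (T.st x) x2 f e2) f2"
proof (intro ballI impI)
  fix x x1 x2 e1 f1 e2 f2 f assume x: "x \<in> T" and x1: "x1 \<in> T" and x2: "x2 \<in> T"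
    and e10: "e1 \<in> Lcl I0 m (T.pl x1)" and f10: "f1 \<in> Rcl L0 m (T.st x1)"
    and e20: "e2 \<in> Lcl I0 m (T.pl x2)" and f20: "f2 \<in> Rcl L0 m (T.st x2)"
    and f0: "f \<in> Rcl L0 m (T.st x)"
    and hyp: "m (T.pl x) (al x x1 f e1) = m (T.pl x) (al x x2 f e2) \<and> m x x1 = m x x2 \<and>
        m (be x x1 f e1) f1 = m (be x x2 f e2) f2"
  have e1: "e1 \<in> ES" "m e1 (T.pl x1) = e1" "m (T.pl x1) e1 = T.pl x1" using LLD[OF x1 e10] by auto
  have e2: "e2 \<in> ES" "m e2 (T.pl x2) = e2" "m (T.pl x2) e2 = T.pl x2" using LLD[OF x2 e20] by auto
  have f: "f \<in> ES" "m (T.st x) f = f" "m f (T.st x) = T.st x" using RRD[OF x f0] by auto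
  have f1: "f1 \<in> ES" "m (T.st x1) f1 = f1" "m f1 (T.st x1) = T.st x1" using RRD[OF x1 f10] by auto
  have f2: "f2 \<in> ES" "m (T.st x2) f2 = f2" "m f2 (T.st x2) = T.st x2" using RRD[OF x2 f20] by auto
  note A1 = c4_aux[OF x x1 e1 f1 f] and A2 = c4_aux[OF x x2 e2 f2 f]
  let ?Q = "m (m (T.pl x) x) f"
  have dQ: "decomp S m T ?Q (T.pl x) x f"
    using x f E0idem[OF plE0[OF x]] by (simp add: decomp_iff)
  have u1: "m (m e1 x1) f1 \<in> S" and u2: "m (m e2 x2) f2 \<in> S" using e1 e2 x1 x2 f1 f2 by simp_all
  have "m ?Q (m (m e1 x1) f1) = m ?Q (m (m e2 x2) f2)" using A1(1) A2(1) hyp by (simp add: asS)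
  then have eq: "m f (m (m e1 x1) f1) = m f (m (m e2 x2) f2)"
    using Lstar_cancel[OF D1'[OF dQ] u1 u2] by simp
  show "al (T.st x) x1 f e1 = al (T.st x) x2 f e2 \<and> m (T.st x) x1 = m (T.st x) x2 \<and>
        m (be (T.st x) x1 f e1) f1 = m (be (T.st x) x2 f e2) f2"
    using A1(2-4) A2(2-4) eq by metis
qed

lemma cdata: "construction_data T m I0 m L0 m al be"
  unfolding construction_data_def Let_def
  using adT I0_lrb L0_rrb I0_un L0_un E0_I0 E0_L0 slt_I0 slt_L0 c_map c_1 c_2 c_3 c_4
  by blast

lemma Wset_iff: "(e, x, f) \<in> Wset T m I0 m L0 m \<longleftrightarrow>
  e \<in> I0 \<and> x \<in> T \<and> f \<in> L0 \<and> e \<in> Lcl I0 m (T.pl x) \<and> f \<in> Rcl L0 m (T.st x)"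
  by (simp add: Wset_def)

lemma iso: "sgrp_iso (Wset T m I0 m L0 m) (Wmult m m m al be) S m"
  unfolding sgrp_iso_def
proof (intro exI conjI)
  let ?W = "Wset T m I0 m L0 m"
  let ?phi = "\<lambda>(e, x, f). m (m e x) f"
  have dec: "tb (?phi w) = fst (snd w) \<and> tE (?phi w) = fst w \<and> tF (?phi w) = snd (snd w)" if w: "w \<in> ?W" for w
  proof -
    obtain e x f where wd: "w = (e, x, f)" by (cases w) auto
    have x: "x \<in> T" and e0: "e \<in> Lcl I0 m (T.pl x)" and f0: "f \<in> Rcl L0 m (T.st x)"
      using w wd Wset_iff by auto
    show ?thesis using Dmk[OF x] LLD[OF x e0] RRD[OF x f0] wd by simp
  qed
  have inS: "?phi w \<in> S" if "w \<in> ?W" for w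
    using that LLD RRD by (auto simp: Wset_def)
  show "bij_betw ?phi ?W S"
    unfolding bij_betw_def
  proof
    show "inj_on ?phi ?W"
    proof (rule inj_onI)
      fix a b assume a: "a \<in> ?W" and b: "b \<in> ?W" and ab: "?phi a = ?phi b"
      show "a = b" using dec[OF a] dec[OF b] ab by (metis prod.collapse)
    qed
    show "?phi ` ?W = S"
    proof
      show "?phi ` ?W \<subseteq> S" using inS by auto
      show "S \<subseteq> ?phi ` ?W"
      proof
        fix s assume s: "s \<in> S"
        have w: "(tE s, tb s, tF s) \<in> ?W"
          using tE_I0[OF s] tF_L0[OF s] tb_in[OF s] tE_L[OF s] tF_R[OF s]
            LL_iff[OF plE0[OF tb_in[OF s]]] RR_iff[OF stE0[OF tb_in[OF s]]]
          by (simp add: Wset_iff)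
        moreover have "s = ?phi (tE s, tb s, tF s)" using t_eq[OF s] by simp
        ultimately show "s \<in> ?phi ` ?W" by blast
      qed
    qed
  qed
  show "\<forall>a\<in>?W. \<forall>b\<in>?W. ?phi (Wmult m m m al be a b) = m (?phi a) (?phi b)"
  proof (intro ballI)
    fix a b assume a: "a \<in> ?W" and b: "b \<in> ?W"
    obtain e x f where ad: "a = (e, x, f)" by (cases a) auto
    obtain g y h where bd: "b = (g, y, h)" by (cases b) auto
    have x: "x \<in> T" and e0: "e \<in> Lcl I0 m (T.pl x)" and f0: "f \<in> Rcl L0 m (T.st x)"
      using a ad Wset_iff by auto
    have y: "y \<in> T" and g0: "g \<in> Lcl I0 m (T.pl y)" and h0: "h \<in> Rcl L0 m (T.st y)"
      using b bd Wset_iff by auto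
    have e: "e \<in> ES" using LLD[OF x e0] by simp
    have f: "f \<in> ES" "m (T.st x) f = f" "m f (T.st x) = T.st x" using RRD[OF x f0] by auto
    have g: "g \<in> ES" "m g (T.pl y) = g" "m (T.pl y) g = T.pl y" using LLD[OF y g0] by auto
    have h: "h \<in> ES" using RRD[OF y h0] by simp
    note W = W_dec[OF x y f g]
    have mem: "x \<in> S" "y \<in> S" "e \<in> S" "f \<in> S" "g \<in> S" "h \<in> S"
      "al x y f g \<in> S" "be x y f g \<in> S" using x y e f g h W by simp_all
    have "m (?phi a) (?phi b) = m (m e (m (m (m x f) g) y)) h" using mem ad bd by (simp add: asS)
    also have "\<dots> = m (m e (m (m (al x y f g) (m x y)) (be x y f g))) h" using W(2) by simp
    also have "\<dots> = ?phi (Wmult m m m al be a b)" using mem ad bd by (simp add: asS Wmult_def)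
    finally show "?phi (Wmult m m m al be a b) = m (?phi a) (?phi b)" by simp
  qed
qed

lemma part2: "\<exists>(S0::'a set) mS I mI L mL \<alpha> \<beta>.
               construction_data S0 mS I mI L mL \<alpha> \<beta> \<and>
               sgrp_iso (Wset S0 mS I mI L mL) (Wmult mS mI mL \<alpha> \<beta>) S m"
  using cdata iso by blast

end

lemma part2_all: "\<forall>(S::'c set) m T. admissible_transversal S m T \<longrightarrow>
            (\<exists>(S0::'c set) mS I mI L mL \<alpha> \<beta>.
               construction_data S0 mS I mI L mL \<alpha> \<beta> \<and>
               sgrp_iso (Wset S0 mS I mI L mL) (Wmult mS mI mL \<alpha> \<beta>) S m)"
  using p2.part2 p2.intro by blast




locale p1 =
  fixes S0 :: "'a set" and mS :: "'a \<Rightarrow> 'a \<Rightarrow> 'a" and I :: "'a set" and mI :: "'a \<Rightarrow> 'a \<Rightarrow> 'a"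
    and L :: "'a set" and mL :: "'a \<Rightarrow> 'a \<Rightarrow> 'a"
    and \<alpha> :: "'a \<Rightarrow> 'a \<Rightarrow> 'a \<Rightarrow> 'a \<Rightarrow> 'a" and \<beta> :: "'a \<Rightarrow> 'a \<Rightarrow> 'a \<Rightarrow> 'a \<Rightarrow> 'a"
  assumes cd: "construction_data S0 mS I mI L mL \<alpha> \<beta>"
begin

lemmas cd' = cd[unfolded construction_data_def Let_def]
lemmas adS0 = cd'[THEN conjunct1]
lemmas lrbI = cd'[THEN conjunct2, THEN conjunct1]
lemmas rrbL = cd'[THEN conjunct2, THEN conjunct2, THEN conjunct1]
lemmas Iun = cd'[THEN conjunct2, THEN conjunct2, THEN conjunct2, THEN conjunct1]
lemmas Lun = cd'[THEN conjunct2, THEN conjunct2, THEN conjunct2, THEN conjunct2, THEN conjunct1]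
lemmas E0sub = cd'[THEN conjunct2, THEN conjunct2, THEN conjunct2, THEN conjunct2, THEN conjunct2, THEN conjunct1]
lemmas sltI = cd'[THEN conjunct2, THEN conjunct2, THEN conjunct2, THEN conjunct2, THEN conjunct2, THEN conjunct2, THEN conjunct1]
lemmas sltL = cd'[THEN conjunct2, THEN conjunct2, THEN conjunct2, THEN conjunct2, THEN conjunct2, THEN conjunct2, THEN conjunct2, THEN conjunct1]
lemmas E0eq = cd'[THEN conjunct2, THEN conjunct2, THEN conjunct2, THEN conjunct2, THEN conjunct2, THEN conjunct2, THEN conjunct2, THEN conjunct2, THEN conjunct1]
lemmas cmap = cd'[THEN conjunct2, THEN conjunct2, THEN conjunct2, THEN conjunct2, THEN conjunct2, THEN conjunct2, THEN conjunct2, THEN conjunct2, THEN conjunct2, THEN conjunct1]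
lemmas c1 = cd'[THEN conjunct2, THEN conjunct2, THEN conjunct2, THEN conjunct2, THEN conjunct2, THEN conjunct2, THEN conjunct2, THEN conjunct2, THEN conjunct2, THEN conjunct2, THEN conjunct1]
lemmas c2 = cd'[THEN conjunct2, THEN conjunct2, THEN conjunct2, THEN conjunct2, THEN conjunct2, THEN conjunct2, THEN conjunct2, THEN conjunct2, THEN conjunct2, THEN conjunct2, THEN conjunct2, THEN conjunct1]
lemmas c3 = cd'[THEN conjunct2, THEN conjunct2, THEN conjunct2, THEN conjunct2, THEN conjunct2, THEN conjunct2, THEN conjunct2, THEN conjunct2, THEN conjunct2, THEN conjunct2, THEN conjunct2, THEN conjunct2, THEN conjunct1]
lemmas c4 = cd'[THEN conjunct2, THEN conjunct2, THEN conjunct2, THEN conjunct2, THEN conjunct2, THEN conjunct2, THEN conjunct2, THEN conjunct2, THEN conjunct2, THEN conjunct2, THEN conjunct2, THEN conjunct2, THEN conjunct2]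

sublocale S: adeq S0 mS by (rule adeq.intro[OF adS0])

abbreviation "E0 \<equiv> idems S0 mS"
abbreviation "LL \<equiv> Lcl I mI"
abbreviation "RR \<equiv> Rcl L mL"

lemma sgI: "sgrp I mI" using lrbI by (simp add: left_regular_band_def band_def)
lemma sgL: "sgrp L mL" using rrbL by (simp add: right_regular_band_def band_def)
lemma idI: "e \<in> I \<Longrightarrow> mI e e = e" using lrbI by (simp add: left_regular_band_def band_def)
lemma idL: "e \<in> L \<Longrightarrow> mL e e = e" using rrbL by (simp add: right_regular_band_def band_def)
lemma clI[simp]: "x \<in> I \<Longrightarrow> y \<in> I \<Longrightarrow> mI x y \<in> I" by (rule sgrp_closed[OF sgI])
lemma clL[simp]: "x \<in> L \<Longrightarrow> y \<in> L \<Longrightarrow> mL x y \<in> L" by (rule sgrp_closed[OF sgL])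
lemma clS[simp]: "x \<in> S0 \<Longrightarrow> y \<in> S0 \<Longrightarrow> mS x y \<in> S0" by (rule S.cl)
lemma asI: "x \<in> I \<Longrightarrow> y \<in> I \<Longrightarrow> z \<in> I \<Longrightarrow> mI (mI x y) z = mI x (mI y z)" by (rule sgrp_assoc[OF sgI])
lemma asL: "x \<in> L \<Longrightarrow> y \<in> L \<Longrightarrow> z \<in> L \<Longrightarrow> mL (mL x y) z = mL x (mL y z)" by (rule sgrp_assoc[OF sgL])
lemma asS: "x \<in> S0 \<Longrightarrow> y \<in> S0 \<Longrightarrow> z \<in> S0 \<Longrightarrow> mS (mS x y) z = mS x (mS y z)" by (rule S.as)
lemma E0I[simp]: "z \<in> E0 \<Longrightarrow> z \<in> I" using E0sub by blast
lemma E0L[simp]: "z \<in> E0 \<Longrightarrow> z \<in> L" using E0sub by blast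
lemma E0S[simp]: "z \<in> E0 \<Longrightarrow> z \<in> S0" by (simp add: idems_iff)
lemma E0eqI: "x \<in> E0 \<Longrightarrow> y \<in> E0 \<Longrightarrow> mI x y = mS x y" using E0eq by blast
lemma E0eqL: "x \<in> E0 \<Longrightarrow> y \<in> E0 \<Longrightarrow> mL x y = mS x y" using E0eq by blast
lemma E0cl[simp]: "x \<in> E0 \<Longrightarrow> y \<in> E0 \<Longrightarrow> mS x y \<in> E0" by (rule S.Eclosed)
lemma E0comm: "x \<in> E0 \<Longrightarrow> y \<in> E0 \<Longrightarrow> mS x y = mS y x" by (rule S.Ecomm)
lemma E0idem: "x \<in> E0 \<Longrightarrow> mS x x = x" by (simp add: idems_iff)
lemma plE0[simp]: "x \<in> S0 \<Longrightarrow> S.pl x \<in> E0" by (rule S.pl_E)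
lemma stE0[simp]: "x \<in> S0 \<Longrightarrow> S.st x \<in> E0" by (rule S.st_E)

lemma idemsI: "e \<in> I \<Longrightarrow> e \<in> idems I mI" unfolding idems_def using idI by blast
lemma idemsL: "e \<in> L \<Longrightarrow> e \<in> idems L mL" unfolding idems_def using idL by blast

lemma LL_iff: assumes z: "z \<in> E0" shows "e \<in> LL z \<longleftrightarrow> e \<in> I \<and> mI e z = e \<and> mI z e = z"
proof (cases "e \<in> I")
  case True
  have "GL I mI e z \<longleftrightarrow> mI e z = e \<and> mI z e = z"
    by (rule GL_idem[OF sgI idemsI[OF True] idemsI[OF E0I[OF z]]])
  then show ?thesis using True by (simp add: Lcl_def)
next
  case False then show ?thesis by (simp add: Lcl_def GL_def)
qed

lemma RR_iff: assumes z: "z \<in> E0" shows "f \<in> RR z \<longleftrightarrow> f \<in> L \<and> mL z f = f \<and> mL f z = z"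
proof (cases "f \<in> L")
  case True
  have "GR L mL f z \<longleftrightarrow> mL z f = f \<and> mL f z = z"
    by (rule GR_idem[OF sgL idemsL[OF True] idemsL[OF E0L[OF z]]])
  then show ?thesis using True by (simp add: Rcl_def)
next
  case False then show ?thesis by (simp add: Rcl_def GR_def)
qed

lemma LLD: "z \<in> E0 \<Longrightarrow> e \<in> LL z \<Longrightarrow> e \<in> I \<and> mI e z = e \<and> mI z e = z" using LL_iff by blast
lemma RRD: "z \<in> E0 \<Longrightarrow> f \<in> RR z \<Longrightarrow> f \<in> L \<and> mL z f = f \<and> mL f z = z" using RR_iff by blast
lemma LL_refl: "z \<in> E0 \<Longrightarrow> z \<in> LL z" using LL_iff idI by simp
lemma RR_refl: "z \<in> E0 \<Longrightarrow> z \<in> RR z" using RR_iff idL by simp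

lemma K1I: assumes p: "p \<in> E0" and q: "q \<in> E0" and e: "e \<in> LL p" and g: "g \<in> LL q" and qp: "mS q p = q"
  shows "mI e g \<in> LL q"
proof -
  have e': "e \<in> I" "mI e p = e" "mI p e = p" using LLD[OF p e] by auto
  have g': "g \<in> I" "mI g q = g" "mI q g = q" using LLD[OF q g] by auto
  have qp': "mI q p = q" using qp E0eqI p q by simp
  have "mI (mI e g) q = mI e (mI g q)" using e'(1) g'(1) q by (simp add: asI)
  then have 1: "mI (mI e g) q = mI e g" using g' by simp
  have "mI q (mI e g) = mI (mI q p) (mI e g)" using qp' by simp
  also have "\<dots> = mI q (mI (mI p e) g)" using e'(1) g'(1) p q by (simp add: asI)
  also have "\<dots> = mI q (mI p g)" using e' by simp
  also have "\<dots> = mI (mI q p) g" using g'(1) p q by (simp add: asI)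
  also have "\<dots> = q" using qp' g' by simp
  finally show ?thesis using 1 LL_iff[OF q] e' g' by simp
qed

lemma K1L: assumes s: "s \<in> E0" and t: "t \<in> E0" and f: "f \<in> RR s" and h: "h \<in> RR t" and st: "mS s t = s"
  shows "mL f h \<in> RR s"
proof -
  have f': "f \<in> L" "mL s f = f" "mL f s = s" using RRD[OF s f] by auto
  have h': "h \<in> L" "mL t h = h" "mL h t = t" using RRD[OF t h] by auto
  have ts: "mL t s = s" using st E0eqL s t E0comm by metis
  have "mL s (mL f h) = mL (mL s f) h" using f'(1) h'(1) s by (simp add: asL)
  then have 1: "mL s (mL f h) = mL f h" using f' by simp
  have "mL (mL f h) s = mL (mL f h) (mL t s)" using ts by simp
  also have "\<dots> = mL f (mL (mL h t) s)" using f'(1) h'(1) s t by (simp add: asL)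
  also have "\<dots> = s" using h' ts f' by simp
  finally show ?thesis using 1 RR_iff[OF s] f' h' by simp
qed

lemma LL_zero: "z \<in> E0 \<Longrightarrow> e \<in> LL z \<Longrightarrow> a \<in> LL z \<Longrightarrow> mI e a = e"
proof -
  assume z: "z \<in> E0" and e: "e \<in> LL z" and a: "a \<in> LL z"
  have e': "e \<in> I" "mI e z = e" using LLD[OF z e] by auto
  have a': "a \<in> I" "mI z a = z" using LLD[OF z a] by auto
  have "mI e a = mI (mI e z) a" using e' by simp
  also have "\<dots> = mI e (mI z a)" using e'(1) a'(1) z by (simp add: asI)
  finally show ?thesis using a' e' by simp
qed

lemma RR_zero: "z \<in> E0 \<Longrightarrow> f \<in> RR z \<Longrightarrow> b \<in> RR z \<Longrightarrow> mL b f = f"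
proof -
  assume z: "z \<in> E0" and f: "f \<in> RR z" and b: "b \<in> RR z"
  have f': "f \<in> L" "mL z f = f" using RRD[OF z f] by auto
  have b': "b \<in> L" "mL b z = z" using RRD[OF z b] by auto
  have "mL b f = mL b (mL z f)" using f' by simp
  also have "\<dots> = mL (mL b z) f" using f'(1) b'(1) z by (simp add: asL)
  finally show ?thesis using b' f' by simp
qed

lemma amap: "x \<in> S0 \<Longrightarrow> y \<in> S0 \<Longrightarrow> f \<in> RR (S.st x) \<Longrightarrow> g \<in> LL (S.pl y) \<Longrightarrow> \<alpha> x y f g \<in> LL (S.pl (mS x y))"
  using cmap by blast
lemma bmap: "x \<in> S0 \<Longrightarrow> y \<in> S0 \<Longrightarrow> f \<in> RR (S.st x) \<Longrightarrow> g \<in> LL (S.pl y) \<Longrightarrow> \<beta> x y f g \<in> RR (S.st (mS x y))"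
  using cmap by blast
lemma ab2: "x \<in> S0 \<Longrightarrow> y \<in> S0 \<Longrightarrow> \<alpha> x y (S.st x) (S.pl y) = S.pl (mS x y) \<and> \<beta> x y (S.st x) (S.pl y) = S.st (mS x y)"
  using c2 by blast

lemmas c1' = c1[rule_format] and c3' = c3[rule_format] and c4' = c4[rule_format]

abbreviation "W \<equiv> Wset S0 mS I mI L mL"
abbreviation "Wm \<equiv> Wmult mS mI mL \<alpha> \<beta>"

lemma W_iff: "(e, x, f) \<in> W \<longleftrightarrow> x \<in> S0 \<and> e \<in> LL (S.pl x) \<and> f \<in> RR (S.st x)"
proof
  assume h: "x \<in> S0 \<and> e \<in> LL (S.pl x) \<and> f \<in> RR (S.st x)"
  then have "e \<in> I" "f \<in> L" using LLD[OF plE0[of x]] RRD[OF stE0[of x]] by auto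
  then show "(e, x, f) \<in> W" using h by (simp add: Wset_def)
qed (simp add: Wset_def)
lemma Wm_simp[simp]: "Wm (e, x, f) (g, y, h) = (mI e (\<alpha> x y f g), mS x y, mL (\<beta> x y f g) h)"
  by (simp add: Wmult_def)

lemma W_closed: assumes a: "(e, x, f) \<in> W" and b: "(g, y, h) \<in> W"
  shows "Wm (e, x, f) (g, y, h) \<in> W"
proof -
  have x: "x \<in> S0" and e: "e \<in> LL (S.pl x)" and f: "f \<in> RR (S.st x)" using a W_iff by auto
  have y: "y \<in> S0" and g: "g \<in> LL (S.pl y)" and h: "h \<in> RR (S.st y)" using b W_iff by auto
  have xy: "mS x y \<in> S0" using x y by simp
  have 1: "mI e (\<alpha> x y f g) \<in> LL (S.pl (mS x y))"
    using K1I[OF plE0[OF x] plE0[OF xy] e amap[OF x y f g] S.pl_prod'[OF x y]] .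
  have 2: "mL (\<beta> x y f g) h \<in> RR (S.st (mS x y))"
    using K1L[OF stE0[OF xy] stE0[OF y] bmap[OF x y f g] h S.st_prod[OF x y]] .
  show ?thesis using 1 2 xy W_iff by simp
qed

lemma W_closed': "a \<in> W \<Longrightarrow> b \<in> W \<Longrightarrow> Wm a b \<in> W"
  using W_closed by (cases a, cases b) auto

lemma W_assoc: assumes a: "(e, x, f) \<in> W" and b: "(g, y, h) \<in> W" and c: "(k, z, l) \<in> W"
  shows "Wm (Wm (e, x, f) (g, y, h)) (k, z, l) = Wm (e, x, f) (Wm (g, y, h) (k, z, l))"
proof -
  have x: "x \<in> S0" and e: "e \<in> LL (S.pl x)" and f: "f \<in> RR (S.st x)" using a W_iff by auto
  have y: "y \<in> S0" and g: "g \<in> LL (S.pl y)" and h: "h \<in> RR (S.st y)" using b W_iff by auto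
  have z: "z \<in> S0" and k: "k \<in> LL (S.pl z)" and l: "l \<in> RR (S.st z)" using c W_iff by auto
  have xy: "mS x y \<in> S0" and yz: "mS y z \<in> S0" using x y z by simp_all
  note C = c1'[OF x y z f g h k]
  have a1: "\<alpha> x y f g \<in> I" using LLD[OF plE0 amap[OF x y f g]] xy by blast
  have b1h: "mL (\<beta> x y f g) h \<in> RR (S.st (mS x y))"
    using K1L[OF stE0[OF xy] stE0[OF y] bmap[OF x y f g] h S.st_prod[OF x y]] .
  have a2: "\<alpha> (mS x y) z (mL (\<beta> x y f g) h) k \<in> I" using LLD[OF plE0 amap[OF xy z b1h k]] xy z by simp
  have eI: "e \<in> I" using LLD[OF plE0 e] x by blast
  have g2: "mI g (\<alpha> y z h k) \<in> LL (S.pl (mS y z))"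
    using K1I[OF plE0[OF y] plE0[OF yz] g amap[OF y z h k] S.pl_prod'[OF y z]] .
  have b3: "\<beta> x (mS y z) f (mI g (\<alpha> y z h k)) \<in> L"
    using RRD[OF stE0 bmap[OF x yz f g2]] x yz by simp
  have b2: "\<beta> y z h k \<in> L" using RRD[OF stE0 bmap[OF y z h k]] yz by blast
  have lL: "l \<in> L" using RRD[OF stE0 l] z by blast
  have "mI (mI e (\<alpha> x y f g)) (\<alpha> (mS x y) z (mL (\<beta> x y f g) h) k)
      = mI e (mI (\<alpha> x y f g) (\<alpha> (mS x y) z (mL (\<beta> x y f g) h) k))" using eI a1 a2 by (simp add: asI)
  also have "\<dots> = mI e (\<alpha> x (mS y z) f (mI g (\<alpha> y z h k)))" using C by simp
  finally have 1: "mI (mI e (\<alpha> x y f g)) (\<alpha> (mS x y) z (mL (\<beta> x y f g) h) k)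
      = mI e (\<alpha> x (mS y z) f (mI g (\<alpha> y z h k)))" .
  have "mL (\<beta> x (mS y z) f (mI g (\<alpha> y z h k))) (mL (\<beta> y z h k) l)
     = mL (mL (\<beta> x (mS y z) f (mI g (\<alpha> y z h k))) (\<beta> y z h k)) l" using b3 b2 lL by (simp add: asL)
  also have "\<dots> = mL (\<beta> (mS x y) z (mL (\<beta> x y f g) h) k) l" using C by simp
  finally have 3: "mL (\<beta> x (mS y z) f (mI g (\<alpha> y z h k))) (mL (\<beta> y z h k) l)
     = mL (\<beta> (mS x y) z (mL (\<beta> x y f g) h) k) l" .
  show ?thesis using 1 3 x y z by (simp add: asS)
qed

lemma sgW: "sgrp W Wm"
  unfolding sgrp_def
proof (intro conjI ballI)
  fix a b assume "a \<in> W" "b \<in> W" then show "Wm a b \<in> W" by (rule W_closed')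
next
  fix a b c assume "a \<in> W" "b \<in> W" "c \<in> W"
  then show "Wm (Wm a b) c = Wm a (Wm b c)" using W_assoc by (cases a, cases b, cases c) blast
qed

lemma idW: assumes a: "(e, x, f) \<in> W" shows "(e, x, f) \<in> idems W Wm \<longleftrightarrow> x \<in> E0"
proof
  assume "(e, x, f) \<in> idems W Wm"
  then have "mS x x = x" by (simp add: idems_iff)
  then show "x \<in> E0" using a W_iff by (simp add: idems_iff)
next
  assume x0: "x \<in> E0"
  have x: "x \<in> S0" and e: "e \<in> LL (S.pl x)" and f: "f \<in> RR (S.st x)" using a W_iff by auto
  have px: "S.pl x = x" "S.st x = x" "mS x x = x" using S.pl_idem S.st_idem x0 E0idem by auto
  have "mI e (\<alpha> x x f e) = e" using LL_zero[OF plE0[OF x] e] amap[OF x x f e] px by simp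
  moreover have "mL (\<beta> x x f e) f = f" using RR_zero[OF stE0[OF x] f] bmap[OF x x f e] px by simp
  ultimately show "(e, x, f) \<in> idems W Wm" using a px by (simp add: idems_iff)
qed

lemma ppl: "x \<in> S0 \<Longrightarrow> S.pl (S.pl x) = S.pl x \<and> S.st (S.pl x) = S.pl x \<and> S.pl (S.st x) = S.st x \<and> S.st (S.st x) = S.st x"
  using S.pl_idem S.st_idem plE0 stE0 by simp

lemma parts: assumes a: "(e, x, f) \<in> W"
  shows "(e, S.pl x, S.pl x) \<in> W" "(S.pl x, x, f) \<in> W" "(e, x, S.st x) \<in> W" "(S.st x, S.st x, f) \<in> W"
    "(e, S.pl x, S.pl x) \<in> idems W Wm" "(S.st x, S.st x, f) \<in> idems W Wm"
    "Wm (e, S.pl x, S.pl x) (S.pl x, x, f) = (e, x, f)"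
    "Wm (e, x, S.st x) (S.st x, S.st x, f) = (e, x, f)"
proof -
  have x: "x \<in> S0" and e: "e \<in> LL (S.pl x)" and f: "f \<in> RR (S.st x)" using a W_iff by auto
  note pp = ppl[OF x]
  show w1: "(e, S.pl x, S.pl x) \<in> W" using x e pp RR_refl[OF plE0[OF x]] W_iff by simp
  show "(S.pl x, x, f) \<in> W" using x f LL_refl[OF plE0[OF x]] W_iff by simp
  show "(e, x, S.st x) \<in> W" using x e RR_refl[OF stE0[OF x]] W_iff by simp
  show w4: "(S.st x, S.st x, f) \<in> W" using x f pp LL_refl[OF stE0[OF x]] W_iff by simp
  show "(e, S.pl x, S.pl x) \<in> idems W Wm" using idW[OF w1] x by simp
  show "(S.st x, S.st x, f) \<in> idems W Wm" using idW[OF w4] x by simp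
  have pxx: "mS (S.pl x) x = x" using S.pl_left x by simp
  have xsx: "mS x (S.st x) = x" using S.st_right x by simp
  have c2a: "\<alpha> (S.pl x) x (S.pl x) (S.pl x) = S.pl x" "\<beta> (S.pl x) x (S.pl x) (S.pl x) = S.st x"
    using ab2[of "S.pl x" x] x pp pxx by simp_all
  have c2b: "\<alpha> x (S.st x) (S.st x) (S.st x) = S.pl x" "\<beta> x (S.st x) (S.st x) (S.st x) = S.st x"
    using ab2[of x "S.st x"] x pp xsx by simp_all
  have eI: "mI e (S.pl x) = e" using LLD[OF plE0[OF x] e] by simp
  have fR: "mL (S.st x) f = f" using RRD[OF stE0[OF x] f] by simp
  show "Wm (e, S.pl x, S.pl x) (S.pl x, x, f) = (e, x, f)" using c2a eI fR pxx by simp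
  show "Wm (e, x, S.st x) (S.st x, S.st x, f) = (e, x, f)" using c2b eI fR xsx by simp
qed

lemma W_asc: "a \<in> W \<Longrightarrow> b \<in> W \<Longrightarrow> c \<in> W \<Longrightarrow> Wm (Wm a b) c = Wm a (Wm b c)"
  using sgW by (simp add: sgrp_def)

lemma ea_a: assumes a: "(e, x, f) \<in> W" shows "Wm (e, S.pl x, S.pl x) (e, x, f) = (e, x, f)"
proof -
  note P = parts[OF a]
  have "Wm (e, S.pl x, S.pl x) (e, x, f) = Wm (e, S.pl x, S.pl x) (Wm (e, S.pl x, S.pl x) (S.pl x, x, f))"
    using P(7) by simp
  also have "\<dots> = Wm (Wm (e, S.pl x, S.pl x) (e, S.pl x, S.pl x)) (S.pl x, x, f)"
    by (rule W_asc[symmetric, OF P(1) P(1) P(2)])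
  also have "\<dots> = (e, x, f)" using P(5,7) by (simp add: idems_iff del: Wm_simp)
  finally show ?thesis .
qed

lemma a_fa: assumes a: "(e, x, f) \<in> W" shows "Wm (e, x, f) (S.st x, S.st x, f) = (e, x, f)"
proof -
  note P = parts[OF a]
  have "Wm (e, x, f) (S.st x, S.st x, f) = Wm (Wm (e, x, S.st x) (S.st x, S.st x, f)) (S.st x, S.st x, f)"
    using P(8) by simp
  also have "\<dots> = Wm (e, x, S.st x) (Wm (S.st x, S.st x, f) (S.st x, S.st x, f))"
    by (rule W_asc[OF P(3) P(4) P(4)])
  also have "\<dots> = (e, x, f)" using P(6,8) by (simp add: idems_iff del: Wm_simp)
  finally show ?thesis .
qed

lemma R_core: assumes a: "(e, x, f) \<in> W" and u1: "u1 \<in> W" and u2: "u2 \<in> W"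
  and h: "Wm u1 (e, x, f) = Wm u2 (e, x, f)"
  shows "Wm u1 (e, S.pl x, S.pl x) = Wm u2 (e, S.pl x, S.pl x)"
proof -
  obtain e1 x1 f1 where u1d: "u1 = (e1, x1, f1)" by (cases u1) auto
  obtain e2 x2 f2 where u2d: "u2 = (e2, x2, f2)" by (cases u2) auto
  have x: "x \<in> S0" and e: "e \<in> LL (S.pl x)" and f: "f \<in> RR (S.st x)" using a W_iff by auto
  have x1: "x1 \<in> S0" and e1: "e1 \<in> LL (S.pl x1)" and f1: "f1 \<in> RR (S.st x1)" using u1 u1d W_iff by auto
  have x2: "x2 \<in> S0" and e2: "e2 \<in> LL (S.pl x2)" and f2: "f2 \<in> RR (S.st x2)" using u2 u2d W_iff by auto
  have h1: "mI e1 (\<alpha> x1 x f1 e) = mI e2 (\<alpha> x2 x f2 e)" and h2: "mS x1 x = mS x2 x"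
    and h3: "mL (\<beta> x1 x f1 e) f = mL (\<beta> x2 x f2 e) f" using h u1d u2d by simp_all
  have fL: "f \<in> L" "mL f (S.st x) = S.st x" using RRD[OF stE0[OF x] f] by auto
  have b1: "\<beta> x1 x f1 e \<in> L" using RRD[OF stE0 bmap[OF x1 x f1 e]] x1 x by simp
  have b2: "\<beta> x2 x f2 e \<in> L" using RRD[OF stE0 bmap[OF x2 x f2 e]] x2 x by simp
  have sxL: "S.st x \<in> L" using x by simp
  have "mL (\<beta> x1 x f1 e) (S.st x) = mL (mL (\<beta> x1 x f1 e) f) (S.st x)" using fL b1 sxL by (simp add: asL)
  also have "\<dots> = mL (mL (\<beta> x2 x f2 e) f) (S.st x)" using h3 by simp
  also have "\<dots> = mL (\<beta> x2 x f2 e) (S.st x)" using fL b2 sxL by (simp add: asL)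
  finally have h3': "mL (\<beta> x1 x f1 e) (S.st x) = mL (\<beta> x2 x f2 e) (S.st x)" .
  have C: "mI e1 (\<alpha> x1 (S.pl x) f1 e) = mI e2 (\<alpha> x2 (S.pl x) f2 e) \<and> mS x1 (S.pl x) = mS x2 (S.pl x) \<and>
        \<beta> x1 (S.pl x) f1 e = \<beta> x2 (S.pl x) f2 e"
    using c3'[OF x x1 x2 e1 f1 e2 f2 e] h1 h2 h3' by blast
  show ?thesis using C u1d u2d by simp
qed

lemma L_core: assumes a: "(e, x, f) \<in> W" and u1: "u1 \<in> W" and u2: "u2 \<in> W"
  and h: "Wm (e, x, f) u1 = Wm (e, x, f) u2"
  shows "Wm (S.st x, S.st x, f) u1 = Wm (S.st x, S.st x, f) u2"
proof -
  obtain e1 x1 f1 where u1d: "u1 = (e1, x1, f1)" by (cases u1) auto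
  obtain e2 x2 f2 where u2d: "u2 = (e2, x2, f2)" by (cases u2) auto
  have x: "x \<in> S0" and e: "e \<in> LL (S.pl x)" and f: "f \<in> RR (S.st x)" using a W_iff by auto
  have x1: "x1 \<in> S0" and e1: "e1 \<in> LL (S.pl x1)" and f1: "f1 \<in> RR (S.st x1)" using u1 u1d W_iff by auto
  have x2: "x2 \<in> S0" and e2: "e2 \<in> LL (S.pl x2)" and f2: "f2 \<in> RR (S.st x2)" using u2 u2d W_iff by auto
  have h1: "mI e (\<alpha> x x1 f e1) = mI e (\<alpha> x x2 f e2)" and h2: "mS x x1 = mS x x2"
    and h3: "mL (\<beta> x x1 f e1) f1 = mL (\<beta> x x2 f e2) f2" using h u1d u2d by simp_all
  have eI: "e \<in> I" "mI (S.pl x) e = S.pl x" using LLD[OF plE0[OF x] e] by auto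
  have a1: "\<alpha> x x1 f e1 \<in> I" using LLD[OF plE0 amap[OF x x1 f e1]] x1 x by simp
  have a2: "\<alpha> x x2 f e2 \<in> I" using LLD[OF plE0 amap[OF x x2 f e2]] x2 x by simp
  have pxI: "S.pl x \<in> I" using x by simp
  have q1: "mI (S.pl x) (mI e (\<alpha> x x1 f e1)) = mI (S.pl x) (\<alpha> x x1 f e1)"
  proof -
    have "mI (S.pl x) (mI e (\<alpha> x x1 f e1)) = mI (mI (S.pl x) e) (\<alpha> x x1 f e1)"
      using eI(1) a1 pxI by (simp add: asI)
    then show ?thesis using eI(2) by simp
  qed
  have q2: "mI (S.pl x) (mI e (\<alpha> x x2 f e2)) = mI (S.pl x) (\<alpha> x x2 f e2)"
  proof -
    have "mI (S.pl x) (mI e (\<alpha> x x2 f e2)) = mI (mI (S.pl x) e) (\<alpha> x x2 f e2)"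
      using eI(1) a2 pxI by (simp add: asI)
    then show ?thesis using eI(2) by simp
  qed
  have "mI (S.pl x) (\<alpha> x x1 f e1) = mI (S.pl x) (mI e (\<alpha> x x1 f e1))" using q1 by simp
  also have "\<dots> = mI (S.pl x) (mI e (\<alpha> x x2 f e2))" using h1 by simp
  also have "\<dots> = mI (S.pl x) (\<alpha> x x2 f e2)" using q2 by simp
  finally have h1': "mI (S.pl x) (\<alpha> x x1 f e1) = mI (S.pl x) (\<alpha> x x2 f e2)" .
  have C: "\<alpha> (S.st x) x1 f e1 = \<alpha> (S.st x) x2 f e2 \<and> mS (S.st x) x1 = mS (S.st x) x2 \<and>
        mL (\<beta> (S.st x) x1 f e1) f1 = mL (\<beta> (S.st x) x2 f e2) f2"
    using c4'[OF x x1 x2 e1 f1 e2 f2 f] h1' h2 h3 by blast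
  show ?thesis using C u1d u2d by simp
qed

lemma Rstar_a: assumes a: "(e, x, f) \<in> W" shows "Rstar W Wm (e, x, f) (e, S.pl x, S.pl x)"
  by (rule Rstar_mk[OF sgW a parts(5)[OF a] ea_a[OF a] R_core[OF a]])

lemma Lstar_a: assumes a: "(e, x, f) \<in> W" shows "Lstar W Wm (e, x, f) (S.st x, S.st x, f)"
  by (rule Lstar_mk[OF sgW a parts(6)[OF a] a_fa[OF a] L_core[OF a]])

lemma abW: "abundant W Wm"
  unfolding abundant_def
proof (intro conjI ballI sgW)
  fix w assume w: "w \<in> W"
  obtain e x f where wd: "w = (e, x, f)" by (cases w) auto
  show "\<exists>e\<in>idems W Wm. Rstar W Wm w e" using Rstar_a parts(5) w wd by blast
  show "\<exists>e\<in>idems W Wm. Lstar W Wm w e" using Lstar_a parts(6) w wd by blast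
qed

lemma qaW: "quasi_adequate W Wm"
  unfolding quasi_adequate_def
proof (intro conjI ballI abW)
  fix a b assume a: "a \<in> idems W Wm" and b: "b \<in> idems W Wm"
  obtain e x f where ad: "a = (e, x, f)" by (cases a) auto
  obtain g y h where bd: "b = (g, y, h)" by (cases b) auto
  have aW: "a \<in> W" and bW: "b \<in> W" using a b by (simp_all add: idems_iff)
  have x: "x \<in> E0" and y: "y \<in> E0" using idW aW bW a b ad bd by auto
  have "Wm a b \<in> W" using W_closed' aW bW .
  then show "Wm a b \<in> idems W Wm" using idW x y ad bd by simp
qed

definition "psi x = (S.pl x, x, S.st x)"
definition "TT = psi ` S0"

lemma psi_W: "x \<in> S0 \<Longrightarrow> psi x \<in> W"
  using LL_refl RR_refl W_iff by (simp add: psi_def)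
lemma psi_hom: assumes "x \<in> S0" "y \<in> S0" shows "Wm (psi x) (psi y) = psi (mS x y)"
proof -
  have "mI (S.pl x) (S.pl (mS x y)) = S.pl (mS x y)" using E0eqI S.pl_prod assms by simp
  moreover have "mL (S.st (mS x y)) (S.st y) = S.st (mS x y)" using E0eqL S.st_prod assms by simp
  ultimately show ?thesis using ab2[OF assms] by (simp add: psi_def)
qed
lemma psi_E0: "z \<in> E0 \<Longrightarrow> psi z = (z, z, z)" using S.pl_idem S.st_idem by (simp add: psi_def)
lemma psi_pl: "x \<in> S0 \<Longrightarrow> psi (S.pl x) = (S.pl x, S.pl x, S.pl x)" using psi_E0 by simp
lemma psi_st: "x \<in> S0 \<Longrightarrow> psi (S.st x) = (S.st x, S.st x, S.st x)" using psi_E0 by simp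
lemma TTW: "TT \<subseteq> W" using psi_W by (auto simp: TT_def)

lemma sisoT: "siso S0 mS TT Wm psi"
proof
  show "bij_betw psi S0 TT" unfolding bij_betw_def TT_def
    by (auto simp: inj_on_def psi_def)
  show "\<And>x y. x \<in> S0 \<Longrightarrow> y \<in> S0 \<Longrightarrow> psi (mS x y) = Wm (psi x) (psi y)" using psi_hom by simp
  show "sgrp S0 mS" by (rule S.sg)
qed

lemma adTT: "adequate TT Wm" using siso.adequate_tr[OF sisoT adS0] .

lemma psi_idem: "x \<in> S0 \<Longrightarrow> psi x \<in> idems TT Wm \<longleftrightarrow> x \<in> E0"
  using siso.idems_tr[OF sisoT] by simp

lemma plTT: assumes x: "x \<in> S0" shows "aplus TT Wm (psi x) = psi (S.pl x)"
proof (rule aplus_eq[OF adTT])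
  show "psi (S.pl x) \<in> idems TT Wm" using psi_idem x by simp
  show "Rstar TT Wm (psi x) (psi (S.pl x))" using siso.Rstar_tr[OF sisoT] S.pl_R x by simp
qed
lemma stTT: assumes x: "x \<in> S0" shows "astar TT Wm (psi x) = psi (S.st x)"
proof (rule astar_eq[OF adTT])
  show "psi (S.st x) \<in> idems TT Wm" using psi_idem x by simp
  show "Lstar TT Wm (psi x) (psi (S.st x))" using siso.Lstar_tr[OF sisoT] S.st_L x by simp
qed

lemma psi_eq_E0: assumes "x \<in> E0" "y \<in> E0" "Wm (psi y) (psi x) = psi x" "Wm (psi x) (psi y) = psi y"
  shows "x = y"
proof -
  have "mS y x = x" "mS x y = y" using assms psi_hom by (simp_all add: psi_def)
  then show ?thesis using E0comm assms by metis
qed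

lemma RstarW_psi: assumes x: "x \<in> S0" and y: "y \<in> S0"
  shows "Rstar W Wm (psi x) (psi y) \<longleftrightarrow> S.pl x = S.pl y"
proof -
  have rx: "Rstar W Wm (psi x) (psi (S.pl x))" using Rstar_a[of "S.pl x" x "S.st x"] psi_W[OF x] psi_pl[OF x]
    by (simp add: psi_def)
  have ry: "Rstar W Wm (psi y) (psi (S.pl y))" using Rstar_a[of "S.pl y" y "S.st y"] psi_W[OF y] psi_pl[OF y]
    by (simp add: psi_def)
  have ix: "psi (S.pl x) \<in> idems W Wm" and iy: "psi (S.pl y) \<in> idems W Wm"
    using idW psi_pl psi_W x y by (metis plE0 E0S)+
  show ?thesis
  proof
    assume "Rstar W Wm (psi x) (psi y)"
    then have "Rstar W Wm (psi (S.pl x)) (psi (S.pl y))"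
      using rx ry Rstar_trans Rstar_sym by metis
    then have "Wm (psi (S.pl y)) (psi (S.pl x)) = psi (S.pl x) \<and> Wm (psi (S.pl x)) (psi (S.pl y)) = psi (S.pl y)"
      using Rstar_idems ix iy by metis
    then show "S.pl x = S.pl y" using psi_eq_E0 x y by simp
  next
    assume "S.pl x = S.pl y"
    then show "Rstar W Wm (psi x) (psi y)" using rx ry Rstar_trans Rstar_sym by metis
  qed
qed

lemma LstarW_psi: assumes x: "x \<in> S0" and y: "y \<in> S0"
  shows "Lstar W Wm (psi x) (psi y) \<longleftrightarrow> S.st x = S.st y"
proof -
  have rx: "Lstar W Wm (psi x) (psi (S.st x))" using Lstar_a[of "S.pl x" x "S.st x"] psi_W[OF x] psi_st[OF x]
    by (simp add: psi_def)
  have ry: "Lstar W Wm (psi y) (psi (S.st y))" using Lstar_a[of "S.pl y" y "S.st y"] psi_W[OF y] psi_st[OF y]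
    by (simp add: psi_def)
  have ix: "psi (S.st x) \<in> idems W Wm" and iy: "psi (S.st y) \<in> idems W Wm"
    using idW psi_st psi_W x y by (metis stE0 E0S)+
  show ?thesis
  proof
    assume "Lstar W Wm (psi x) (psi y)"
    then have "Lstar W Wm (psi (S.st x)) (psi (S.st y))"
      using rx ry Lstar_trans Lstar_sym by metis
    then have "Wm (psi (S.st x)) (psi (S.st y)) = psi (S.st x) \<and> Wm (psi (S.st y)) (psi (S.st x)) = psi (S.st y)"
      using Lstar_idems ix iy by metis
    then have "mS (S.st x) (S.st y) = S.st x" "mS (S.st y) (S.st x) = S.st y"
      using psi_hom x y by (simp_all add: psi_def)
    then show "S.st x = S.st y" using E0comm x y by (metis stE0)
  next
    assume "S.st x = S.st y"
    then show "Lstar W Wm (psi x) (psi y)" using rx ry Lstar_trans Lstar_sym by metis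
  qed
qed

lemma ssTT: "star_subsgrp TT W Wm"
  unfolding star_subsgrp_def
proof (intro conjI ballI TTW)
  show "abundant TT Wm" using adTT by (simp add: adequate_def)
  fix a b assume a: "a \<in> TT" and b: "b \<in> TT"
  then obtain x y where x: "x \<in> S0" "a = psi x" and y: "y \<in> S0" "b = psi y" by (auto simp: TT_def)
  show "Lstar TT Wm a b \<longleftrightarrow> Lstar W Wm a b"
    using x y siso.Lstar_tr[OF sisoT] S.Lstar_iff LstarW_psi by simp
  show "Rstar TT Wm a b \<longleftrightarrow> Rstar W Wm a b"
    using x y siso.Rstar_tr[OF sisoT] S.Rstar_iff RstarW_psi by simp
qed

lemma psi_TT: "x \<in> S0 \<Longrightarrow> psi x \<in> TT" by (simp add: TT_def)

lemma dW: assumes a: "(e, x, f) \<in> W"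
  shows "decomp W Wm TT (e, x, f) (e, S.pl x, S.pl x) (psi x) (S.st x, S.st x, f)"
proof -
  have x: "x \<in> S0" and e: "e \<in> LL (S.pl x)" and f: "f \<in> RR (S.st x)" using a W_iff by auto
  note P = parts[OF a]
  let ?p = "S.pl x" and ?s = "S.st x"
  have p: "?p \<in> E0" and s: "?s \<in> E0" using x by simp_all
  have pp: "mS ?p ?p = ?p" "mS ?s ?s = ?s" using E0idem p s by auto
  note pl = ppl[OF x]
  have a1: "\<alpha> ?p ?p ?p ?p = ?p" "\<beta> ?p ?p ?p ?p = ?p"
    using ab2[of ?p ?p] pl pp x by simp_all
  have a2: "\<alpha> ?s ?s ?s ?s = ?s" "\<beta> ?s ?s ?s ?s = ?s"
    using ab2[of ?s ?s] pl pp x by simp_all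
  have eL: "mI e ?p = e" using LLD[OF p e] by simp
  have fR: "mL ?s f = f" using RRD[OF s f] by simp
  have pS: "?p \<in> S0" and sS: "?s \<in> S0" using p s by simp_all
  have pW1: "psi ?p \<in> W" using psi_W[OF pS] .
  have sW1: "psi ?s \<in> W" using psi_W[OF sS] .
  have pW: "psi ?p \<in> idems W Wm" using idW[of ?p ?p ?p] pW1 psi_E0[OF p] p by simp
  have sW: "psi ?s \<in> idems W Wm" using idW[of ?s ?s ?s] sW1 psi_E0[OF s] s by simp
  have al1: "\<alpha> ?p ?p ?p e \<in> LL ?p" "\<beta> ?p ?p ?p e \<in> RR ?p"
    using amap[of ?p ?p ?p e] bmap[of ?p ?p ?p e] x pl pp RR_refl[OF p] e by simp_all
  have al2: "\<alpha> ?s ?s f ?s \<in> LL ?s" "\<beta> ?s ?s f ?s \<in> RR ?s"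
    using amap[of ?s ?s f ?s] bmap[of ?s ?s f ?s] x pl pp LL_refl[OF s] f by simp_all
  have g1: "Wm (e, ?p, ?p) (psi ?p) = (e, ?p, ?p)" using a1 eL pp psi_pl x E0idem E0eqL p by simp
  have g2: "Wm (psi ?p) (e, ?p, ?p) = psi ?p"
    using psi_pl[OF x] LLD[OF p al1(1)] RRD[OF p al1(2)] pp by simp
  have GL: "GL W Wm (e, ?p, ?p) (aplus TT Wm (psi x))"
    using GL_idem[OF sgW P(5) pW] g1 g2 plTT[OF x] by simp
  have r1: "Wm (psi ?s) (?s, ?s, f) = (?s, ?s, f)" using a2 fR pp psi_st x E0idem E0eqI s by simp
  have r2: "Wm (?s, ?s, f) (psi ?s) = psi ?s"
    using psi_st[OF x] LLD[OF s al2(1)] RRD[OF s al2(2)] pp by simp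
  have GR: "GR W Wm (?s, ?s, f) (astar TT Wm (psi x))"
    using GR_idem[OF sgW P(6) sW] r1 r2 stTT[OF x] by simp
  have ex: "Wm (e, ?p, ?p) (psi x) = (e, x, ?s)" using parts(7)[OF P(3)] by (simp add: psi_def)
  have "(e, x, f) = Wm (Wm (e, ?p, ?p) (psi x)) (?s, ?s, f)" using ex P(8) by simp
  then show ?thesis unfolding decomp_def using psi_TT[OF x] P(5,6) GL GR by simp
qed

lemma dW_unique: assumes a: "(e, x, f) \<in> W" and d: "decomp W Wm TT (e, x, f) e' xb f'"
  shows "xb = psi x"
proof -
  have xb: "xb \<in> TT" and e': "e' \<in> idems W Wm" and f': "f' \<in> idems W Wm"
    and w: "(e, x, f) = Wm (Wm e' xb) f'" and gl: "GL W Wm e' (aplus TT Wm xb)"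
    and gr: "GR W Wm f' (astar TT Wm xb)" using d by (simp_all add: decomp_def)
  obtain z where z: "z \<in> S0" "xb = psi z" using xb by (auto simp: TT_def)
  obtain e1 u f1 where ed: "e' = (e1, u, f1)" by (cases e') auto
  obtain g1 v h1 where fd: "f' = (g1, v, h1)" by (cases f') auto
  have eW: "e' \<in> W" and fW: "f' \<in> W" using e' f' by (simp_all add: idems_iff)
  have u: "u \<in> E0" using idW eW e' ed by simp
  have v: "v \<in> E0" using idW fW f' fd by simp
  have pz: "S.pl z \<in> E0" and sz: "S.st z \<in> E0" using z by simp_all
  have pzI: "psi (S.pl z) \<in> idems W Wm" using idW[of "S.pl z" "S.pl z" "S.pl z"] psi_W[OF E0S[OF pz]] psi_E0[OF pz] pz by simp
  have szI: "psi (S.st z) \<in> idems W Wm" using idW[of "S.st z" "S.st z" "S.st z"] psi_W[OF E0S[OF sz]] psi_E0[OF sz] sz by simp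
  have "Wm e' (psi (S.pl z)) = e' \<and> Wm (psi (S.pl z)) e' = psi (S.pl z)"
    using GL_idem[OF sgW e' pzI] gl plTT z by simp
  then have "mS u (S.pl z) = u" "mS (S.pl z) u = S.pl z" using ed psi_pl z by simp_all
  then have u': "u = S.pl z" using E0comm u z by (metis plE0)
  have "Wm (psi (S.st z)) f' = f' \<and> Wm f' (psi (S.st z)) = psi (S.st z)"
    using GR_idem[OF sgW f' szI] gr stTT z by simp
  then have "mS (S.st z) v = v" "mS v (S.st z) = S.st z" using fd psi_st z by simp_all
  then have v': "v = S.st z" using E0comm v z by (metis stE0)
  have "x = mS (mS u z) v" using w ed fd z by (simp add: psi_def)
  also have "\<dots> = z" using u' v' S.pl_left S.st_right z by simp
  finally show ?thesis using z by simp
qed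

lemma ex1W: "w \<in> W \<Longrightarrow> \<exists>!xb. \<exists>e f. decomp W Wm TT w e xb f"
proof -
  assume w: "w \<in> W"
  obtain e x f where wd: "w = (e, x, f)" by (cases w) auto
  show ?thesis
  proof
    show "\<exists>e' f'. decomp W Wm TT w e' (psi x) f'" using dW w wd by blast
    fix xb assume "\<exists>e' f'. decomp W Wm TT w e' xb f'"
    then show "xb = psi x" using dW_unique w wd by blast
  qed
qed

lemma tbarW: assumes "(e, x, f) \<in> W" shows "tbar W Wm TT (e, x, f) = psi x"
  unfolding tbar_def
proof (rule the_equality)
  show "\<exists>e' f'. decomp W Wm TT (e, x, f) e' (psi x) f'" using dW assms by blast
  fix xb assume "\<exists>e' f'. decomp W Wm TT (e, x, f) e' xb f'"
  then show "xb = psi x" using dW_unique assms by blast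
qed

lemma atW: "adequate_transversal W Wm TT"
  unfolding adequate_transversal_def using abW adTT ssTT ex1W by blast

lemma admW: "admissible_transversal W Wm TT"
  unfolding admissible_transversal_def
proof (intro conjI ballI qaW atW)
  fix a b assume a: "a \<in> W" and b: "b \<in> W"
  obtain e x f where ad: "a = (e, x, f)" by (cases a) auto
  obtain g y h where bd: "b = (g, y, h)" by (cases b) auto
  have x: "x \<in> S0" and y: "y \<in> S0" using a b ad bd W_iff by auto
  have ab: "Wm a b \<in> W" using W_closed' a b .
  have "tbar W Wm TT (Wm a b) = psi (mS x y)" using tbarW ab ad bd by simp
  also have "\<dots> = Wm (psi x) (psi y)" using psi_hom x y by simp
  finally show "tbar W Wm TT (Wm a b) = Wm (tbar W Wm TT a) (tbar W Wm TT b)"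
    using tbarW a b ad bd by simp
qed

lemma isoTT: "sgrp_iso TT Wm S0 mS"
  unfolding sgrp_iso_def
proof (intro exI conjI)
  let ?g = "\<lambda>w. fst (snd w)"
  show "bij_betw ?g TT S0" unfolding bij_betw_def TT_def
    by (auto simp: inj_on_def psi_def image_iff)
  show "\<forall>a\<in>TT. \<forall>b\<in>TT. ?g (Wm a b) = mS (?g a) (?g b)"
    by (auto simp: TT_def psi_hom psi_def[symmetric]) (simp add: psi_def)
qed

lemma inv0_I: assumes z: "z \<in> E0" and e: "e \<in> LL z" shows "inv0 mI E0 e = z"
proof -
  have e': "e \<in> I" "mI e z = e" "mI z e = z" using LLD[OF z e] by auto
  have u: "\<exists>!e0. e0 \<in> E0 \<and> inverse_in mI e e0" using sltI e'(1) by (simp add: semilattice_transversal_def)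
  have zz: "z \<in> E0 \<and> inverse_in mI e z" using z e' idI by (simp add: inverse_in_def)
  show ?thesis unfolding inv0_def by (rule the1_equality[OF u zz])
qed

lemma inv0_L: assumes z: "z \<in> E0" and f: "f \<in> RR z" shows "inv0 mL E0 f = z"
proof -
  have f': "f \<in> L" "mL z f = f" "mL f z = z" using RRD[OF z f] by auto
  have u: "\<exists>!e0. e0 \<in> E0 \<and> inverse_in mL f e0" using sltL f'(1) by (simp add: semilattice_transversal_def)
  have zz: "z \<in> E0 \<and> inverse_in mL f z" using z f' idL by (simp add: inverse_in_def)
  show ?thesis unfolding inv0_def by (rule the1_equality[OF u zz])
qed

lemma tW: assumes a: "(e, x, f) \<in> W"
  shows "te W Wm TT (e, x, f) = (e, S.pl x, S.pl x) \<and> tf W Wm TT (e, x, f) = (S.st x, S.st x, f)"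
proof -
  interpret P: p2 W Wm TT by (rule p2.intro[OF admW])
  show ?thesis using P.D3[OF dW[OF a]] by simp
qed

lemma Iset_W: "Iset W Wm TT = {(e, z, z) | e z. z \<in> E0 \<and> e \<in> LL z}"
proof
  show "Iset W Wm TT \<subseteq> {(e, z, z) | e z. z \<in> E0 \<and> e \<in> LL z}"
  proof
    fix a assume "a \<in> Iset W Wm TT"
    then obtain w where w: "w \<in> W" "a = te W Wm TT w" by (auto simp: Iset_def)
    obtain e x f where wd: "w = (e, x, f)" by (cases w) auto
    have "x \<in> S0" "e \<in> LL (S.pl x)" using w wd W_iff by auto
    then show "a \<in> {(e, z, z) | e z. z \<in> E0 \<and> e \<in> LL z}" using tW w wd by force
  qed
  show "{(e, z, z) | e z. z \<in> E0 \<and> e \<in> LL z} \<subseteq> Iset W Wm TT"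
  proof
    fix a assume "a \<in> {(e, z, z) | e z. z \<in> E0 \<and> e \<in> LL z}"
    then obtain e z where a: "a = (e, z, z)" "z \<in> E0" "e \<in> LL z" by blast
    have pz: "S.pl z = z" "S.st z = z" using S.pl_idem S.st_idem a(2) by auto
    have w: "(e, z, z) \<in> W" using a pz RR_refl W_iff by simp
    have "te W Wm TT (e, z, z) = (e, z, z)" using tW[OF w] pz by simp
    then show "a \<in> Iset W Wm TT" using w a unfolding Iset_def by (metis imageI)
  qed
qed

lemma Lamset_W: "Lamset W Wm TT = {(z, z, f) | f z. z \<in> E0 \<and> f \<in> RR z}"
proof
  show "Lamset W Wm TT \<subseteq> {(z, z, f) | f z. z \<in> E0 \<and> f \<in> RR z}"
  proof
    fix a assume "a \<in> Lamset W Wm TT"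
    then obtain w where w: "w \<in> W" "a = tf W Wm TT w" by (auto simp: Lamset_def)
    obtain e x f where wd: "w = (e, x, f)" by (cases w) auto
    have "x \<in> S0" "f \<in> RR (S.st x)" using w wd W_iff by auto
    then show "a \<in> {(z, z, f) | f z. z \<in> E0 \<and> f \<in> RR z}" using tW w wd by force
  qed
  show "{(z, z, f) | f z. z \<in> E0 \<and> f \<in> RR z} \<subseteq> Lamset W Wm TT"
  proof
    fix a assume "a \<in> {(z, z, f) | f z. z \<in> E0 \<and> f \<in> RR z}"
    then obtain f z where a: "a = (z, z, f)" "z \<in> E0" "f \<in> RR z" by blast
    have pz: "S.pl z = z" "S.st z = z" using S.pl_idem S.st_idem a(2) by auto
    have w: "(z, z, f) \<in> W" using a pz LL_refl W_iff by simp
    have "tf W Wm TT (z, z, f) = (z, z, f)" using tW[OF w] pz by simp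
    then show "a \<in> Lamset W Wm TT" using w a unfolding Lamset_def by (metis imageI)
  qed
qed

lemma c5I: assumes c5: "condition5 S0 mS I mI L mL \<alpha> \<beta>"
  shows "sgrp_iso (Iset W Wm TT) Wm I mI"
  unfolding sgrp_iso_def Iset_W
proof (intro exI conjI)
  let ?A = "{(e, z, z) | e z. z \<in> E0 \<and> e \<in> LL z}"
  show "bij_betw fst ?A I"
    unfolding bij_betw_def
  proof
    show "inj_on fst ?A"
    proof (rule inj_onI)
      fix a b assume "a \<in> ?A" "b \<in> ?A" "fst a = fst b"
      then obtain e z z' where "a = (e, z, z)" "b = (e, z', z')" "z \<in> E0" "z' \<in> E0" "e \<in> LL z" "e \<in> LL z'"
        by auto
      then show "a = b" using inv0_I by metis
    qed
    show "fst ` ?A = I"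
    proof
      show "fst ` ?A \<subseteq> I" using LLD by auto
      show "I \<subseteq> fst ` ?A"
      proof
        fix e assume "e \<in> I"
        then obtain z where "z \<in> E0" "e \<in> LL z" using Iun by blast
        then show "e \<in> fst ` ?A" by force
      qed
    qed
  qed
  show "\<forall>a\<in>?A. \<forall>b\<in>?A. fst (Wm a b) = mI (fst a) (fst b)"
  proof (intro ballI)
    fix a b assume "a \<in> ?A" "b \<in> ?A"
    then obtain e p g q where ab: "a = (e, p, p)" "b = (g, q, q)" "p \<in> E0" "q \<in> E0" "e \<in> LL p" "g \<in> LL q"
      by auto
    have pL: "p \<in> L" using ab by simp
    have gI: "g \<in> I" using LLD ab by blast
    have i1: "inv0 mL E0 p = p" using inv0_L[OF ab(3) RR_refl[OF ab(3)]] .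
    have i2: "inv0 mI E0 g = q" using inv0_I[OF ab(4,6)] .
    have "\<alpha> p q p g = mI p g" using c5 pL gI i1 i2 unfolding condition5_def Let_def by metis
    moreover have "mI e (mI p g) = mI e g"
    proof -
      have e': "e \<in> I" "mI e p = e" using LLD[OF ab(3,5)] by auto
      have "mI e (mI p g) = mI (mI e p) g" using e'(1) gI ab(3) by (simp add: asI)
      then show ?thesis using e' by simp
    qed
    ultimately show "fst (Wm a b) = mI (fst a) (fst b)" using ab by simp
  qed
qed

lemma c5L: assumes c5: "condition5 S0 mS I mI L mL \<alpha> \<beta>"
  shows "sgrp_iso (Lamset W Wm TT) Wm L mL"
  unfolding sgrp_iso_def Lamset_W
proof (intro exI conjI)
  let ?A = "{(z, z, f) | f z. z \<in> E0 \<and> f \<in> RR z}"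
  let ?g = "\<lambda>w. snd (snd w)"
  show "bij_betw ?g ?A L"
    unfolding bij_betw_def
  proof
    show "inj_on ?g ?A"
    proof (rule inj_onI)
      fix a b assume "a \<in> ?A" "b \<in> ?A" "?g a = ?g b"
      then obtain f z z' where "a = (z, z, f)" "b = (z', z', f)" "z \<in> E0" "z' \<in> E0" "f \<in> RR z" "f \<in> RR z'"
        by auto
      then show "a = b" using inv0_L by metis
    qed
    show "?g ` ?A = L"
    proof
      show "?g ` ?A \<subseteq> L" using RRD by auto
      show "L \<subseteq> ?g ` ?A"
      proof
        fix f assume "f \<in> L"
        then obtain z where "z \<in> E0" "f \<in> RR z" using Lun by blast
        then show "f \<in> ?g ` ?A" by force
      qed
    qed
  qed
  show "\<forall>a\<in>?A. \<forall>b\<in>?A. ?g (Wm a b) = mL (?g a) (?g b)"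
  proof (intro ballI)
    fix a b assume "a \<in> ?A" "b \<in> ?A"
    then obtain f p h q where ab: "a = (p, p, f)" "b = (q, q, h)" "p \<in> E0" "q \<in> E0" "f \<in> RR p" "h \<in> RR q"
      by auto
    have fL: "f \<in> L" using RRD ab by blast
    have qI: "q \<in> I" using ab by simp
    have i1: "inv0 mL E0 f = p" using inv0_L[OF ab(3,5)] .
    have i2: "inv0 mI E0 q = q" using inv0_I[OF ab(4) LL_refl[OF ab(4)]] .
    have "\<beta> p q f q = mL f q" using c5 fL qI i1 i2 unfolding condition5_def Let_def by metis
    moreover have "mL (mL f q) h = mL f h"
    proof -
      have h': "h \<in> L" "mL q h = h" using RRD[OF ab(4,6)] by auto
      have "mL (mL f q) h = mL f (mL q h)" using h'(1) fL ab(4) by (simp add: asL)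
      then show ?thesis using h' by simp
    qed
    ultimately show "?g (Wm a b) = mL (?g a) (?g b)" using ab by simp
  qed
qed

lemma part1: "quasi_adequate W Wm \<and>
            (\<exists>T. admissible_transversal W Wm T \<and> sgrp_iso T Wm S0 mS \<and>
                 (condition5 S0 mS I mI L mL \<alpha> \<beta> \<longrightarrow>
                    sgrp_iso (Iset W Wm T) Wm I mI \<and> sgrp_iso (Lamset W Wm T) Wm L mL))"
  using qaW admW isoTT c5I c5L by blast

end

theorem theorem2p16:
  shows "(\<forall>(S0::'a set) mS I mI L mL \<alpha> \<beta>.
            construction_data S0 mS I mI L mL \<alpha> \<beta> \<longrightarrow>
            quasi_adequate (Wset S0 mS I mI L mL) (Wmult mS mI mL \<alpha> \<beta>) \<and>
            (\<exists>T. admissible_transversal (Wset S0 mS I mI L mL) (Wmult mS mI mL \<alpha> \<beta>) T \<and>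
                 sgrp_iso T (Wmult mS mI mL \<alpha> \<beta>) S0 mS \<and>
                 (condition5 S0 mS I mI L mL \<alpha> \<beta> \<longrightarrow>
                    sgrp_iso (Iset (Wset S0 mS I mI L mL) (Wmult mS mI mL \<alpha> \<beta>) T)
                             (Wmult mS mI mL \<alpha> \<beta>) I mI \<and>
                    sgrp_iso (Lamset (Wset S0 mS I mI L mL) (Wmult mS mI mL \<alpha> \<beta>) T)
                             (Wmult mS mI mL \<alpha> \<beta>) L mL))) \<and>
         (\<forall>(S::'c set) m T. admissible_transversal S m T \<longrightarrow>
            (\<exists>(S0::'c set) mS I mI L mL \<alpha> \<beta>.
               construction_data S0 mS I mI L mL \<alpha> \<beta> \<and>
               sgrp_iso (Wset S0 mS I mI L mL) (Wmult mS mI mL \<alpha> \<beta>) S m))"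
proof (rule conjI)
  show "\<forall>(S0::'a set) mS I mI L mL \<alpha> \<beta>.
            construction_data S0 mS I mI L mL \<alpha> \<beta> \<longrightarrow>
            quasi_adequate (Wset S0 mS I mI L mL) (Wmult mS mI mL \<alpha> \<beta>) \<and>
            (\<exists>T. admissible_transversal (Wset S0 mS I mI L mL) (Wmult mS mI mL \<alpha> \<beta>) T \<and>
                 sgrp_iso T (Wmult mS mI mL \<alpha> \<beta>) S0 mS \<and>
                 (condition5 S0 mS I mI L mL \<alpha> \<beta> \<longrightarrow>
                    sgrp_iso (Iset (Wset S0 mS I mI L mL) (Wmult mS mI mL \<alpha> \<beta>) T)
                             (Wmult mS mI mL \<alpha> \<beta>) I mI \<and>
                    sgrp_iso (Lamset (Wset S0 mS I mI L mL) (Wmult mS mI mL \<alpha> \<beta>) T)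
                             (Wmult mS mI mL \<alpha> \<beta>) L mL))"
    by (intro allI impI) (rule p1.part1[OF p1.intro])
next
  show "\<forall>(S::'c set) m T. admissible_transversal S m T \<longrightarrow>
            (\<exists>(S0::'c set) mS I mI L mL \<alpha> \<beta>.
               construction_data S0 mS I mI L mL \<alpha> \<beta> \<and>
               sgrp_iso (Wset S0 mS I mI L mL) (Wmult mS mI mL \<alpha> \<beta>) S m)"
    by (rule part2_all)
qed

end
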